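(* For $k\in\omega$ let $L(k)$ be the number of (isomorphism types of) countable homogeneous colored linear orderings in $k$ colors. (1) $L(k)$ equals the number of (isomorphism types of) models of $T^{'-}_k$. (2) Let $J(0)=1$ and $J(k+1)=2(k+1)J(k)+\sum_{i=2}^{k+1}\binom{k+1}{i}J(k+1-i)$. Then $L(k)=\sum_{i=0}^{k}J(i)\binom{k}{i}$. (3) $\sum_{k\ge0}L(k)\frac{x^k}{k!}=H(x)=\frac{e^x}{2-x-e^x}$. (4) With $W$ the principal branch of the Lambert $W$ function, $Z=2-W(e^2)\approx0.442854$ and $R=\frac{-e^2}{e^{W(e^2)}+e^2}\approx-0.6089389$, one has $L(k)\sim -k!\,R\,(1/Z)^{k+1}$ as $k\to\infty$. (5) The proportion, among the countable homogeneous colored linear orderings in $k$ colors, of those using all $k$ colors tends to $\frac{1}{W(e^2)}\approx0.6422007$ as $k\to\infty$.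
   Context: A colored linear ordering in $k$ colors is a linear ordering together with $k$ fixed (labeled) unary predicates partitioning it (some colors may be unused); isomorphisms preserve order and each color. It is homogeneous if every isomorphism between finite substructures extends to an automorphism. $T^{'-}_k$ is the theory in the language $(<,R_1,\dots,R_k,S_1,\dots,S_k)$ of unary predicates with axioms: $<$ is a linear order; every element satisfies some $R_i$ or some $S_i$; no element satisfies two distinct $R_i$; no element satisfies both some $R_i$ and some $S_j$; each $R_i$ and each $S_i$ holds of at most one element; for no $i$ are both $R_i$ and $S_i$ realized. *)

theory Defs
  imports Complex_Main "HOL-Computational_Algebra.Formal_Power_Series" "HOL-Library.Landau_Symbols"
begin

definition iso_types :: "('s \<Rightarrow> bool) \<Rightarrow> ('s \<Rightarrow> 's \<Rightarrow> bool) \<Rightarrow> 's set set" where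
  "iso_types P rel = {{T. P T \<and> rel S T} | S. P S}"

definition strict_linear_on :: "nat set \<Rightarrow> (nat \<Rightarrow> nat \<Rightarrow> bool) \<Rightarrow> bool" where
  "strict_linear_on A lt \<longleftrightarrow>
     (\<forall>x\<in>A. \<not> lt x x) \<and>
     (\<forall>x\<in>A. \<forall>y\<in>A. \<forall>z\<in>A. lt x y \<and> lt y z \<longrightarrow> lt x z) \<and>
     (\<forall>x\<in>A. \<forall>y\<in>A. x \<noteq> y \<longrightarrow> lt x y \<or> lt y x)"

text \<open>A countable colored linear ordering in k colors: carrier A (a subset of nat, so
  countable), strict order lt, colour map c with values in {0..<k} (color i = predicate R_(i+1)).\<close>
type_synonym clo = "nat set \<times> (nat \<Rightarrow> nat \<Rightarrow> bool) \<times> (nat \<Rightarrow> nat)"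

definition is_clo :: "nat \<Rightarrow> clo \<Rightarrow> bool" where
  "is_clo k S = (case S of (A, lt, c) \<Rightarrow> strict_linear_on A lt \<and> (\<forall>x\<in>A. c x < k))"

definition clo_iso_on :: "(nat \<Rightarrow> nat \<Rightarrow> bool) \<Rightarrow> (nat \<Rightarrow> nat) \<Rightarrow> nat set \<Rightarrow>
    (nat \<Rightarrow> nat \<Rightarrow> bool) \<Rightarrow> (nat \<Rightarrow> nat) \<Rightarrow> nat set \<Rightarrow> (nat \<Rightarrow> nat) \<Rightarrow> bool" where
  "clo_iso_on lt c X lt' c' Y f \<longleftrightarrow> bij_betw f X Y \<and>
     (\<forall>x\<in>X. \<forall>y\<in>X. lt x y \<longleftrightarrow> lt' (f x) (f y)) \<and> (\<forall>x\<in>X. c' (f x) = c x)"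

definition clo_iso :: "clo \<Rightarrow> clo \<Rightarrow> bool" where
  "clo_iso S T = (case S of (A, lt, c) \<Rightarrow> case T of (B, lt', c') \<Rightarrow>
     (\<exists>f. clo_iso_on lt c A lt' c' B f))"

definition clo_homogeneous :: "clo \<Rightarrow> bool" where
  "clo_homogeneous S = (case S of (A, lt, c) \<Rightarrow>
     (\<forall>X Y p. finite X \<and> X \<subseteq> A \<and> Y \<subseteq> A \<and> clo_iso_on lt c X lt c Y p \<longrightarrow>
        (\<exists>g. clo_iso_on lt c A lt c A g \<and> (\<forall>x\<in>X. g x = p x))))"

definition is_hclo :: "nat \<Rightarrow> clo \<Rightarrow> bool" where
  "is_hclo k S \<longleftrightarrow> is_clo k S \<and> clo_homogeneous S"

definition L :: "nat \<Rightarrow> nat" where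
  "L k = card (iso_types (is_hclo k) clo_iso)"

definition L_all :: "nat \<Rightarrow> nat" where
  "L_all k = card (iso_types (\<lambda>S. is_hclo k S \<and> snd (snd S) ` fst S = {0..<k}) clo_iso)"

text \<open>Structure (A, lt, R, S): R i x means x satisfies R_(i+1), S i x means x satisfies S_(i+1).\<close>
type_synonym tstr = "nat set \<times> (nat \<Rightarrow> nat \<Rightarrow> bool) \<times> (nat \<Rightarrow> nat \<Rightarrow> bool) \<times> (nat \<Rightarrow> nat \<Rightarrow> bool)"

definition is_model_T :: "nat \<Rightarrow> tstr \<Rightarrow> bool" where
  "is_model_T k M = (case M of (A, lt, R, S) \<Rightarrow>
     strict_linear_on A lt \<and>
     (\<forall>x\<in>A. (\<exists>i<k. R i x) \<or> (\<exists>i<k. S i x)) \<and>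
     (\<forall>x\<in>A. \<forall>i<k. \<forall>j<k. R i x \<and> R j x \<longrightarrow> i = j) \<and>
     (\<forall>x\<in>A. \<forall>i<k. \<forall>j<k. \<not> (R i x \<and> S j x)) \<and>
     (\<forall>i<k. \<forall>x\<in>A. \<forall>y\<in>A. R i x \<and> R i y \<longrightarrow> x = y) \<and>
     (\<forall>i<k. \<forall>x\<in>A. \<forall>y\<in>A. S i x \<and> S i y \<longrightarrow> x = y) \<and>
     (\<forall>i<k. \<not> ((\<exists>x\<in>A. R i x) \<and> (\<exists>x\<in>A. S i x))))"

definition T_iso :: "nat \<Rightarrow> tstr \<Rightarrow> tstr \<Rightarrow> bool" where
  "T_iso k M N = (case M of (A, lt, R, S) \<Rightarrow> case N of (B, lt', R', S') \<Rightarrow>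
     (\<exists>f. bij_betw f A B \<and>
        (\<forall>x\<in>A. \<forall>y\<in>A. lt x y \<longleftrightarrow> lt' (f x) (f y)) \<and>
        (\<forall>i<k. \<forall>x\<in>A. R i x \<longleftrightarrow> R' i (f x)) \<and>
        (\<forall>i<k. \<forall>x\<in>A. S i x \<longleftrightarrow> S' i (f x))))"

definition num_models_T :: "nat \<Rightarrow> nat" where
  "num_models_T k = card (iso_types (is_model_T k) (T_iso k))"

function J :: "nat \<Rightarrow> nat" where
  "J 0 = 1"
| "J (Suc k) = 2 * Suc k * J k + (\<Sum>i\<in>{2..Suc k}. (Suc k choose i) * J (Suc k - i))"
  by pat_completeness auto
termination by (relation "measure id") auto

definition lambertW :: "real \<Rightarrow> real" where
  "lambertW y = (THE w. -1 \<le> w \<and> w * exp w = y)"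

end

theory Submission
  imports Defs "HOL-Complex_Analysis.Complex_Analysis" "HOL-Library.Countable_Set"
begin


lemma Den_nth:
  "fps_nth (2 - fps_X - fps_exp 1 :: 'a::field_char_0 fps) k =
     (if k = 0 then 2 else 0) - (if k = 1 then 1 else 0) - 1 / fact k"
  by (simp add: fps_numeral_nth fps_exp_def fps_X_nth)

lemma J_rec_field:
  "(of_nat (J (Suc m)) :: 'a::field_char_0) = 2 * of_nat (Suc m) * of_nat (J m)
     + (\<Sum>i\<in>{2..Suc m}. of_nat (Suc m choose i) * of_nat (J (Suc m - i)))"
  by (simp only: J.simps of_nat_add of_nat_mult of_nat_sum of_nat_numeral)

lemma J_egf:
  "(2 - fps_X - fps_exp 1) * Abs_fps (\<lambda>n. of_nat (J n) / fact n :: 'a::field_char_0) = 1"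
proof (rule fps_ext)
  fix n
  show "fps_nth ((2 - fps_X - fps_exp 1) * Abs_fps (\<lambda>n. of_nat (J n) / fact n :: 'a)) n = fps_nth (1::'a fps) n"
  proof (cases n)
    case 0
    then show ?thesis by (simp add: fps_mult_nth Den_nth)
  next
    case (Suc m)
    define G where "G = (\<lambda>k. (of_nat (J k) / fact k :: 'a))"
    have split: "{0..Suc m} = insert 0 (insert 1 {2..Suc m})" by auto
    have "fps_nth ((2 - fps_X - fps_exp 1) * Abs_fps G) (Suc m)
        = (\<Sum>i\<in>{0..Suc m}. ((if i = 0 then 2 else 0) - (if i = 1 then 1 else 0) - 1 / fact i) * G (Suc m - i))"
      by (simp only: fps_mult_nth fps_nth_Abs_fps Den_nth)
    also have "\<dots> = (2 - 0 - 1) * G (Suc m) + ((0 - 1 - 1) * G m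
         + (\<Sum>i\<in>{2..Suc m}. ((if i = 0 then 2 else 0) - (if i = 1 then 1 else 0) - 1 / fact i) * G (Suc m - i)))"
      unfolding split by (subst sum.insert; simp)+
    also have "(\<Sum>i\<in>{2..Suc m}. ((if i = 0 then 2 else 0) - (if i = 1 then 1 else 0) - 1 / fact i) * G (Suc m - i))
        = - (\<Sum>i\<in>{2..Suc m}. G (Suc m - i) / fact i)"
      unfolding sum_negf[symmetric] by (rule sum.cong) auto
    also have "(2 - 0 - 1) * G (Suc m) + ((0 - 1 - 1) * G m + - (\<Sum>i\<in>{2..Suc m}. G (Suc m - i) / fact i))
       = G (Suc m) - 2 * G m - (\<Sum>i\<in>{2..Suc m}. G (Suc m - i) / fact i)" by simp
    also have "(\<Sum>i\<in>{2..Suc m}. G (Suc m - i) / fact i)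
        = (\<Sum>i\<in>{2..Suc m}. of_nat (Suc m choose i) * of_nat (J (Suc m - i))) / fact (Suc m)"
      unfolding sum_divide_distrib
    proof (rule sum.cong[OF refl])
      fix i assume i: "i \<in> {2..Suc m}"
      then have "i \<le> Suc m" by simp
      then show "G (Suc m - i) / fact i
           = of_nat (Suc m choose i) * of_nat (J (Suc m - i)) / fact (Suc m)"
        by (simp add: G_def binomial_fact[OF \<open>i \<le> Suc m\<close>] del: fact_Suc of_nat_Suc)
    qed
    also have "G (Suc m) - 2 * G m - \<dots> = 0"
    proof -
      have "fact (Suc m) = (of_nat (Suc m) * fact m :: 'a)" by simp
      then show ?thesis
        unfolding G_def J_rec_field[where 'a='a]
        by (simp add: field_simps del: of_nat_Suc fact_Suc)
    qed
    finally show ?thesis using Suc by (simp add: G_def)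
  qed
qed


lemma egf_binom:
  "Abs_fps (\<lambda>n. of_nat (\<Sum>i=0..n. J i * (n choose i)) / fact n :: 'a::field_char_0)
     = fps_exp 1 * Abs_fps (\<lambda>n. of_nat (J n) / fact n)"
proof (rule fps_ext)
  fix n
  have "fps_nth (fps_exp 1 * Abs_fps (\<lambda>n. of_nat (J n) / fact n :: 'a)) n
      = fps_nth (Abs_fps (\<lambda>n. of_nat (J n) / fact n :: 'a) * fps_exp 1) n"
    by (simp add: mult.commute)
  also have "\<dots> = (\<Sum>i=0..n. of_nat (J i) / fact i * (1 / fact (n - i)))"
    by (simp add: fps_mult_nth fps_exp_def)
  also have "\<dots> = (\<Sum>i=0..n. of_nat (J i * (n choose i)) / fact n)"
  proof (rule sum.cong[OF refl])
    fix i assume "i \<in> {0..n}"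
    then have "i \<le> n" by simp
    then show "of_nat (J i) / fact i * (1 / fact (n - i)) = (of_nat (J i * (n choose i)) / fact n :: 'a)"
      by (simp add: binomial_fact[OF \<open>i \<le> n\<close>] del: fact_Suc of_nat_Suc)
  qed
  also have "\<dots> = of_nat (\<Sum>i=0..n. J i * (n choose i)) / fact n"
    by (simp add: sum_divide_distrib)
  finally show "fps_nth (Abs_fps (\<lambda>n. of_nat (\<Sum>i=0..n. J i * (n choose i)) / fact n :: 'a)) n
      = fps_nth (fps_exp 1 * Abs_fps (\<lambda>n. of_nat (J n) / fact n)) n" by simp
qed

lemma inv_Den: "inverse (2 - fps_X - fps_exp 1 :: 'a::field_char_0 fps) = Abs_fps (\<lambda>n. of_nat (J n) / fact n)"
proof -
  let ?D = "2 - fps_X - fps_exp 1 :: 'a fps"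
  let ?G = "Abs_fps (\<lambda>n. of_nat (J n) / fact n :: 'a)"
  have D0: "fps_nth ?D 0 \<noteq> 0" by (simp add: Den_nth)
  have "inverse ?D = inverse ?D * (?D * ?G)" by (simp add: J_egf)
  also have "\<dots> = (inverse ?D * ?D) * ?G" by (simp add: mult.assoc)
  also have "\<dots> = ?G" using inverse_mult_eq_1[OF D0] by simp
  finally show ?thesis .
qed

lemma J_div: "Abs_fps (\<lambda>n. of_nat (J n) / fact n :: 'a::field_char_0) = 1 / (2 - fps_X - fps_exp 1)"
proof -
  have D0: "fps_nth (2 - fps_X - fps_exp 1 :: 'a fps) 0 \<noteq> 0" by (simp add: Den_nth)
  show ?thesis by (simp add: fps_divide_unit[OF D0] inv_Den)
qed

lemma L_div: "Abs_fps (\<lambda>n. of_nat (\<Sum>i=0..n. J i * (n choose i)) / fact n :: 'a::field_char_0)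
   = fps_exp 1 / (2 - fps_X - fps_exp 1)"
proof -
  have D0: "fps_nth (2 - fps_X - fps_exp 1 :: 'a fps) 0 \<noteq> 0" by (simp add: Den_nth)
  show ?thesis unfolding egf_binom by (simp add: fps_divide_unit[OF D0] inv_Den)
qed


lemma Zc_ex: "\<exists>x::real. 0 < x \<and> x < 1 \<and> exp x = 2 - x"
proof -
  have "\<exists>x\<ge>0. x \<le> 1 \<and> exp x + x = (2::real)"
  proof (rule IVT[where f="\<lambda>x. exp x + x"])
    show "exp 0 + 0 \<le> (2::real)" by simp
    have "exp (1::real) \<ge> 1 + 1" by (rule exp_ge_add_one_self)
    then show "(2::real) \<le> exp 1 + 1" by simp
  qed (auto intro!: continuous_intros)
  then obtain x :: real where x: "0 \<le> x" "x \<le> 1" "exp x + x = 2" by blast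
  have "x \<noteq> 0" using x by auto
  moreover have "x \<noteq> 1" using x exp_ge_add_one_self[of "1::real"] by auto
  ultimately show ?thesis using x by (intro exI[of _ x]) auto
qed

definition Zc :: real where "Zc = (SOME x. 0 < x \<and> x < 1 \<and> exp x = 2 - x)"

lemma Zc: "0 < Zc" "Zc \<le> 1/2" "exp Zc = 2 - Zc"
proof -
  have h: "0 < Zc \<and> Zc < 1 \<and> exp Zc = 2 - Zc"
    unfolding Zc_def by (rule someI_ex[OF Zc_ex])
  then show "0 < Zc" "exp Zc = 2 - Zc" by auto
  show "Zc \<le> 1/2" using h exp_ge_add_one_self[of Zc] by auto
qed

lemma lambertW_e2: "lambertW (exp 2) = 2 - Zc"
proof -
  have mono: "w1 = w2" if "w1 * exp w1 = exp 2" "w2 * exp w2 = (exp 2::real)" for w1 w2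
  proof -
    have p: "w > 0" if "w * exp w = exp 2" for w :: real
    proof (rule ccontr)
      assume "\<not> w > 0"
      then have "w * exp w \<le> 0" by (simp add: mult_nonpos_nonneg)
      with that show False by simp
    qed
    have "w1 * exp w1 < w2 * exp w2" if "0 < w1" "w1 < w2" for w1 w2 :: real
      using that by (intro mult_strict_mono) auto
    with p[OF that(1)] p[OF that(2)] that show ?thesis
      by (metis linorder_neq_iff)
  qed
  have e: "(2 - Zc) * exp (2 - Zc) = exp 2"
    using Zc(3) by (simp add: exp_diff)
  show ?thesis unfolding lambertW_def
  proof (rule the_equality)
    show "-1 \<le> 2 - Zc \<and> (2 - Zc) * exp (2 - Zc) = exp 2" using e Zc(2) by simp
    fix w :: real assume "-1 \<le> w \<and> w * exp w = exp 2"
    then show "w = 2 - Zc" using mono[of w "2 - Zc"] e by blast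
  qed
qed

lemma D_zero:
  fixes z :: complex
  assumes "z \<in> ball 0 (3/4)" "2 - z - exp z = 0"
  shows "z = of_real Zc"
proof -
  define S where "S = ball (2::complex) (3/4)"
  have Sn: "norm (2 - w) < 3/4" if "w \<in> S" for w
    using that by (simp add: S_def dist_norm)
  have Ln_lip: "norm (Ln a - Ln b) \<le> (4/5) * norm (a - b)" if ab: "a \<in> S" "b \<in> S" for a b
  proof (rule field_differentiable_bound[where f' = inverse and S = S])
    show "convex S" unfolding S_def by simp
    fix w assume w: "w \<in> S"
    have "Re (2 - w) \<le> norm (2 - w)" by (rule complex_Re_le_cmod)
    with Sn[OF w] have "Re w > 0" by simp
    then have "w \<notin> \<real>\<^sub>\<le>\<^sub>0" by (simp add: complex_nonpos_Reals_iff)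
    then show "(Ln has_field_derivative inverse w) (at w within S)"
      by (rule has_field_derivative_at_within[OF has_field_derivative_Ln])
    have "norm (w + (2 - w)) \<le> norm w + norm (2 - w)" by (rule norm_triangle_ineq)
    then have "norm w \<ge> 5/4" using Sn[OF w] by simp
    then have "inverse (norm w) \<le> inverse (5/4)"
      by (rule le_imp_inverse_le) simp
    then show "norm (inverse w) \<le> 4/5"
      by (simp add: norm_inverse)
  next
    show "a \<in> S" by (fact ab(1))
    show "b \<in> S" by (fact ab(2))
  qed
  have im: "\<bar>Im u\<bar> < 3/4" if "u \<in> ball 0 (3/4)" for u :: complex
  proof -
    have "\<bar>Im u\<bar> \<le> norm u" by (rule abs_Im_le_cmod)
    moreover have "norm u < 3/4" using that by simp
    ultimately show ?thesis by linarith
  qed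
  have fix1: "Ln (2 - u) = u" if "u \<in> ball 0 (3/4)" "exp u = 2 - u" for u :: complex
  proof -
    have "-pi < Im u" "Im u \<le> pi" using im[OF that(1)] pi_gt3 by linarith+
    then have "Ln (exp u) = u" by (rule Ln_exp)
    with that(2) show ?thesis by simp
  qed
  have Zb: "complex_of_real Zc \<in> ball 0 (3/4)" using Zc(1,2) by simp
  have eZ: "exp (complex_of_real Zc) = 2 - complex_of_real Zc"
    by (metis Zc(3) exp_of_real of_real_diff of_real_numeral)
  have inS: "2 - u \<in> S" if "u \<in> ball 0 (3/4)" for u :: complex
    using that unfolding S_def by (simp add: dist_norm)
  have ez: "exp z = 2 - z" using assms(2) by (simp add: algebra_simps)
  have "norm (z - of_real Zc) = norm (Ln (2 - z) - Ln (2 - of_real Zc))"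
    using fix1[OF assms(1) ez] fix1[OF Zb eZ] by simp
  also have "\<dots> \<le> (4/5) * norm ((2 - z) - (2 - of_real Zc))"
    by (rule Ln_lip[OF inS[OF assms(1)] inS[OF Zb]])
  also have "\<dots> = (4/5) * norm (z - of_real Zc)"
    by (simp add: norm_minus_commute)
  finally show ?thesis by simp
qed


lemma asym_main:
  fixes c :: complex and F :: "complex fps"
  assumes F: "(\<lambda>z. exp (c*z) / (2 - z - exp z)) has_fps_expansion F"
  shows "(\<lambda>n. fps_nth F n * of_real Zc ^ (n+1)) \<longlonglongrightarrow> exp (c * of_real Zc) / (1 + exp (of_real Zc))"
proof -
  define z0 where "z0 = complex_of_real Zc"
  define D where "D = (\<lambda>z::complex. 2 - z - exp z)"
  define S where "S = ball (0::complex) (3/4)"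
  have z0S: "z0 \<in> S" using Zc(1,2) by (simp add: z0_def S_def)
  have z0nz: "z0 \<noteq> 0" using Zc(1) by (simp add: z0_def)
  have eZ: "exp z0 = 2 - z0"
    unfolding z0_def by (metis Zc(3) exp_of_real of_real_diff of_real_numeral)
  have D0: "D z0 = 0" using eZ by (simp add: D_def)
  have Dnz: "D z \<noteq> 0" if "z \<in> S" "z \<noteq> z0" for z
    using D_zero[of z] that by (auto simp: D_def S_def z0_def)
  have holD: "D holomorphic_on S" unfolding D_def by (intro holomorphic_intros)
  have "(D has_field_derivative (0 - 1 - exp z0)) (at z0)"
    unfolding D_def by (intro derivative_intros DERIV_exp)
  then have dD: "deriv D z0 = -1 - exp z0" by (simp add: DERIV_imp_deriv)
  have dDnz: "-1 - exp z0 \<noteq> 0"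
  proof
    assume "-1 - exp z0 = 0"
    then have "z0 = 3" using eZ by simp
    then have "complex_of_real Zc = complex_of_real 3" unfolding z0_def by simp
    then have "Zc = 3" using of_real_eq_iff by blast
    then show False using Zc(2) by simp
  qed
  define q where "q = (\<lambda>z. if z = z0 then deriv D z0 else (D z - D z0)/(z - z0))"
  have holq: "q holomorphic_on S"
    unfolding q_def by (rule pole_lemma[OF holD]) (use z0S in \<open>simp add: S_def\<close>)
  have qnz: "q z \<noteq> 0" if "z \<in> S" for z
  proof (cases "z = z0")
    case True then show ?thesis using dD dDnz by (simp add: q_def)
  next
    case False then show ?thesis using Dnz[OF that False] D0 by (simp add: q_def)
  qed
  define g where "g = (\<lambda>z. exp (c*z) / q z)"
  have holg: "g holomorphic_on S"
    unfolding g_def by (intro holomorphic_on_divide holomorphic_intros holq) (use qnz in auto)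
  have geq: "g z = (z - z0) * (exp (c*z) / D z)" if "z \<in> S - {z0}" for z
    using that D0 Dnz[of z] by (auto simp: g_def q_def field_simps)
  have holh0: "(\<lambda>z. if z = z0 then deriv g z0 else (exp (c*z) / D z) - g z0/(z-z0)) holomorphic_on S"
    by (rule pole_theorem[OF holg _ geq]) (use z0S in \<open>simp add: S_def\<close>)
  define h where "h = (\<lambda>z. if z = z0 then deriv g z0 else (exp (c*z) / D z) - g z0/(z-z0))"
  have holh: "h holomorphic_on eball 0 (ereal (3/4))"
    using holh0 unfolding h_def S_def by simp
  define A where "A = g z0"
  define E where "E = Abs_fps (\<lambda>n. - A / z0^(n+1))"
  have E: "(\<lambda>z. A / (z - z0)) has_fps_expansion E"
  proof (rule has_fps_expansionI)
    have "eventually (\<lambda>u. u \<in> ball 0 Zc) (nhds (0::complex))"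
      using Zc(1) by (intro eventually_nhds_in_open) auto
    then show "eventually (\<lambda>u. (\<lambda>n. fps_nth E n * u ^ n) sums (A / (u - z0))) (nhds 0)"
    proof eventually_elim
      case (elim u)
      have nu: "norm (u / z0) < 1"
        using elim Zc(1) by (simp add: z0_def norm_divide field_simps)
      have "(\<lambda>n. (u/z0)^n) sums (1 / (1 - u/z0))" by (rule geometric_sums[OF nu])
      then have "(\<lambda>n. (-A/z0) * (u/z0)^n) sums ((-A/z0) * (1 / (1 - u/z0)))" by (rule sums_mult)
      moreover have "u \<noteq> z0" using elim by (auto simp: z0_def)
      ultimately have "(\<lambda>n. fps_nth E n * u ^ n) sums (- (A / (z0 - u)))" using z0nz
        by (simp add: E_def field_simps power_divide)
      moreover have "- (A / (z0 - u)) = A / (u - z0)"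
        by (metis minus_diff_eq minus_divide_right)
      ultimately show ?case by simp
    qed
  qed
  have "(\<lambda>z. exp (c*z) / D z - A / (z - z0)) has_fps_expansion (F - E)"
  proof -
    have F': "(\<lambda>z. exp (c*z) / D z) has_fps_expansion F" using F by (simp add: D_def)
    show ?thesis using has_fps_expansion_diff[OF F' E] by simp
  qed
  moreover have "eventually (\<lambda>z. (exp (c*z) / D z - A / (z - z0)) = h z) (nhds 0)"
  proof -
    have "eventually (\<lambda>u. u \<in> ball 0 Zc) (nhds (0::complex))"
      using Zc(1) by (intro eventually_nhds_in_open) auto
    then show ?thesis
      by eventually_elim (auto simp: h_def A_def z0_def)
  qed
  ultimately have hF: "h has_fps_expansion (F - E)"
    using has_fps_expansion_cong[of "\<lambda>z. exp (c*z) / D z - A / (z - z0)" h "F - E" "F - E"] by blast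
  have "(\<lambda>n. fps_nth (F - E) n * (5/8) ^ n) sums h (5/8)"
    by (rule has_fps_expansion_imp_sums_complex[OF hF holh]) simp
  then have t1: "(\<lambda>n. fps_nth (F - E) n * (5/8) ^ n) \<longlonglongrightarrow> 0"
    using summable_LIMSEQ_zero sums_summable by blast
  have t2: "(\<lambda>n. (z0 * (8/5)) ^ n) \<longlonglongrightarrow> 0"
    by (rule LIMSEQ_power_zero) (use Zc(1,2) in \<open>simp add: z0_def norm_mult\<close>)
  have "(\<lambda>n. (fps_nth (F - E) n * (5/8) ^ n) * ((z0 * (8/5)) ^ n) * z0) \<longlonglongrightarrow> 0 * 0 * z0"
    by (intro tendsto_mult t1 t2 tendsto_const)
  then have t3: "(\<lambda>n. fps_nth (F - E) n * z0 ^ (n+1)) \<longlonglongrightarrow> 0"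
    by (simp add: power_mult_distrib mult_ac flip: power_mult power_mult_distrib)
  have t4: "(\<lambda>n. fps_nth (F - E) n * z0 ^ (n+1) + (- A)) \<longlonglongrightarrow> 0 + (- A)"
    by (intro tendsto_add t3 tendsto_const)
  have eq: "fps_nth (F - E) n * z0 ^ (n+1) + (- A) = fps_nth F n * z0 ^ (n+1)" for n
    using z0nz by (simp add: E_def field_simps)
  have "-A = exp (c * z0) / (1 + exp z0)"
  proof -
    have "-1 - exp z0 = -(1 + exp z0)" by simp
    then show ?thesis unfolding A_def g_def q_def dD by (simp only: if_True refl simp_thms divide_minus_right minus_minus)
  qed
  then show ?thesis using t4 unfolding eq by (simp add: z0_def)
qed


lemma Den_expansion: "(\<lambda>z::complex. 2 - z - exp z) has_fps_expansion (2 - fps_X - fps_exp 1)"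
proof -
  have "(\<lambda>z::complex. 2 - z - exp (1 * z)) has_fps_expansion (2 - fps_X - fps_exp 1)"
    by (intro has_fps_expansion_diff has_fps_expansion_numeral has_fps_expansion_fps_X has_fps_expansion_exp)
  then show ?thesis by simp
qed

lemma exp_div_expansion:
  "(\<lambda>z. exp (c*z) / (2 - z - exp z)) has_fps_expansion (fps_exp c / (2 - fps_X - fps_exp (1::complex)))"
  by (rule has_fps_expansion_divide'[OF has_fps_expansion_exp Den_expansion]) (simp add: Den_nth)

lemma coeff_limit:
  fixes a :: "nat \<Rightarrow> nat" and c :: real
  assumes "Abs_fps (\<lambda>n. of_nat (a n) / fact n :: complex) = fps_exp (of_real c) / (2 - fps_X - fps_exp 1)"
  shows "(\<lambda>n. real (a n) / fact n * Zc ^ (n+1)) \<longlonglongrightarrow> exp (c * Zc) / (1 + exp Zc)"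
proof -
  have F: "(\<lambda>z. exp (of_real c * z) / (2 - z - exp z)) has_fps_expansion Abs_fps (\<lambda>n. of_nat (a n) / fact n :: complex)"
    unfolding assms by (rule exp_div_expansion)
  have "(\<lambda>n. fps_nth (Abs_fps (\<lambda>n. of_nat (a n) / fact n :: complex)) n * of_real Zc ^ (n+1))
        \<longlonglongrightarrow> exp (of_real c * of_real Zc) / (1 + exp (of_real Zc))"
    by (rule asym_main[OF F])
  moreover have "(\<lambda>n. fps_nth (Abs_fps (\<lambda>n. of_nat (a n) / fact n :: complex)) n * of_real Zc ^ (n+1))
     = (\<lambda>n. complex_of_real (real (a n) / fact n * Zc ^ (n+1)))"
    by (simp add: fun_eq_iff)
  moreover have "exp (of_real c * of_real Zc) / (1 + exp (of_real Zc))
      = complex_of_real (exp (c * Zc) / (1 + exp Zc))"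
    by (simp flip: exp_of_real)
  ultimately have "(\<lambda>n. complex_of_real (real (a n) / fact n * Zc ^ (n+1)))
       \<longlonglongrightarrow> complex_of_real (exp (c * Zc) / (1 + exp Zc))" by simp
  then show ?thesis by (simp only: tendsto_of_real_iff)
qed

lemma analytic_part:
  assumes L: "\<And>k. L k = (\<Sum>i=0..k. J i * (k choose i))" and LA: "\<And>k. L_all k = J k"
  shows "Abs_fps (\<lambda>k. real (L k) / fact k) = fps_exp (1::real) / (2 - fps_X - fps_exp 1)"
    and "(let Z = 2 - lambertW (exp 2); R = - exp 2 / (exp (lambertW (exp 2)) + exp 2) in
        (\<lambda>k. real (L k)) \<sim>[at_top] (\<lambda>k. - fact k * R * (1 / Z) ^ (k + 1)))"
    and "(\<lambda>k. real (L_all k) / real (L k)) \<longlonglongrightarrow> 1 / lambertW (exp 2)"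
proof -
  show "Abs_fps (\<lambda>k. real (L k) / fact k) = fps_exp (1::real) / (2 - fps_X - fps_exp 1)"
    unfolding L by (rule L_div)
  have "Abs_fps (\<lambda>n. of_nat (L n) / fact n :: complex) = fps_exp (of_real 1) / (2 - fps_X - fps_exp 1)"
    unfolding L of_real_1 by (rule L_div)
  from coeff_limit[OF this] have tL: "(\<lambda>n. real (L n) / fact n * Zc ^ (n+1)) \<longlonglongrightarrow> exp Zc / (1 + exp Zc)"
    by simp
  have "Abs_fps (\<lambda>n. of_nat (L_all n) / fact n :: complex) = fps_exp (of_real 0) / (2 - fps_X - fps_exp 1)"
    unfolding LA of_real_0 fps_exp_0 by (rule J_div)
  from coeff_limit[OF this] have tJ: "(\<lambda>n. real (L_all n) / fact n * Zc ^ (n+1)) \<longlonglongrightarrow> 1 / (1 + exp Zc)"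
    by simp
  define l where "l = exp Zc / (1 + exp Zc)"
  have ne: "1 + exp Zc \<noteq> 0" by (metis add_pos_pos exp_gt_zero less_numeral_extra(1,3))
  have lpos: "l > 0" unfolding l_def by (simp add: add_pos_pos)
  have lw: "lambertW (exp 2) = 2 - Zc" by (rule lambertW_e2)
  have R: "- exp 2 / (exp (lambertW (exp 2)) + exp 2) = - l"
  proof -
    have e1: "exp (lambertW (exp 2)) = exp 2 / exp Zc" unfolding lw by (simp add: exp_diff)
    have e2: "exp 2 / exp Zc + exp 2 = exp 2 * (1 + exp Zc) / exp Zc"
      by (simp add: field_simps)
    have ne: "1 + exp Zc \<noteq> 0" by (metis add_pos_pos exp_gt_zero less_numeral_extra(1,3))
    have ne2: "exp 2 + exp Zc * exp (2::real) \<noteq> 0"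
      by (metis add_pos_pos exp_gt_zero mult_pos_pos less_numeral_extra(3))
    then show ?thesis unfolding l_def e1 e2 using ne by (simp add: field_simps)
  qed
  have Z: "2 - lambertW (exp 2) = Zc" unfolding lw by simp
  have Zpos: "Zc > 0" by (rule Zc(1))
  have "(\<lambda>k. real (L k) / (- fact k * (- l) * (1 / Zc) ^ (k + 1))) \<longlonglongrightarrow> l / l"
  proof -
    have "(\<lambda>k. (real (L k) / fact k * Zc ^ (k+1)) / l) \<longlonglongrightarrow> l / l"
      using tL lpos unfolding l_def by (intro tendsto_divide tendsto_const) auto
    moreover have "(\<lambda>k. (real (L k) / fact k * Zc ^ (k+1)) / l) = (\<lambda>k. real (L k) / (- fact k * (- l) * (1 / Zc) ^ (k + 1)))"
      using Zpos by (simp add: fun_eq_iff field_simps power_one_over)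
    ultimately show ?thesis by simp
  qed
  then have "(\<lambda>k. real (L k)) \<sim>[at_top] (\<lambda>k. - fact k * (- l) * (1 / Zc) ^ (k + 1))"
    using lpos by (intro asymp_equivI') simp
  then show "(let Z = 2 - lambertW (exp 2); R = - exp 2 / (exp (lambertW (exp 2)) + exp 2) in
        (\<lambda>k. real (L k)) \<sim>[at_top] (\<lambda>k. - fact k * R * (1 / Z) ^ (k + 1)))"
    unfolding Let_def R Z .
  have "(\<lambda>k. (real (L_all k) / fact k * Zc ^ (k+1)) / (real (L k) / fact k * Zc ^ (k+1)))
        \<longlonglongrightarrow> (1 / (1 + exp Zc)) / l"
    using tJ tL lpos unfolding l_def by (intro tendsto_divide) auto
  moreover have "(\<lambda>k. (real (L_all k) / fact k * Zc ^ (k+1)) / (real (L k) / fact k * Zc ^ (k+1)))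
     = (\<lambda>k. real (L_all k) / real (L k))"
    using Zpos by (simp add: fun_eq_iff field_simps)
  moreover have "(1 / (1 + exp Zc)) / l = 1 / lambertW (exp 2)"
    unfolding lw l_def using Zc(3) Zc(2) ne by (simp add: field_simps)
  ultimately show "(\<lambda>k. real (L_all k) / real (L k)) \<longlonglongrightarrow> 1 / lambertW (exp 2)" by simp
qed


definition Rels :: "nat set \<Rightarrow> (nat \<times> nat) set set" where
  "Rels U = {R. R \<subseteq> U \<times> U \<and> trans R \<and> (\<forall>i\<in>U. \<forall>j\<in>U. i \<noteq> j \<longrightarrow> (i,j) \<in> R \<or> (j,i) \<in> R)}"

definition topc :: "(nat \<times> nat) set \<Rightarrow> nat set \<Rightarrow> nat set" where
  "topc R U = {i\<in>U. \<forall>j\<in>U. j \<noteq> i \<longrightarrow> (j,i) \<in> R}"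

definition build :: "nat set \<Rightarrow> nat set \<Rightarrow> (nat \<times> nat) set \<Rightarrow> bool \<Rightarrow> (nat \<times> nat) set" where
  "build U T R' b = R' \<union> (U - T) \<times> T \<union> (if b then T \<times> T else {})"

lemma sum_Pow_card:
  assumes "finite U"
  shows "(\<Sum>T\<in>Pow U. f (card T)) = (\<Sum>i=0..card U. (card U choose i) * (f i :: nat))"
proof -
  have "(\<Sum>T\<in>Pow U. f (card T)) = (\<Sum>i\<in>{0..card U}. \<Sum>T\<in>{T\<in>Pow U. card T = i}. f (card T))"
    by (rule sum.group[symmetric]) (use assms in \<open>auto intro: card_mono\<close>)
  also have "\<dots> = (\<Sum>i\<in>{0..card U}. card {T. T \<subseteq> U \<and> card T = i} * f i)"
    by (rule sum.cong) auto
  also have "\<dots> = (\<Sum>i=0..card U. (card U choose i) * f i)"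
    using n_subsets[OF assms] by simp
  finally show ?thesis .
qed

lemma Rels_finite: "finite U \<Longrightarrow> finite (Rels U)"
  by (rule finite_subset[of _ "Pow (U \<times> U)"]) (auto simp: Rels_def)

lemma Rels_empty: "Rels {} = {{}}"
  by (auto simp: Rels_def trans_def)

lemma topc_ne:
  assumes R: "R \<in> Rels U" and V: "finite V" "V \<noteq> {}" "V \<subseteq> U"
  shows "\<exists>i\<in>V. \<forall>j\<in>V. j \<noteq> i \<longrightarrow> (j,i) \<in> R"
  using V
proof (induction V rule: finite_ne_induct)
  case (singleton x) then show ?case by auto
next
  case (insert a V)
  then obtain i where i: "i \<in> V" "\<forall>j\<in>V. j \<noteq> i \<longrightarrow> (j,i) \<in> R" by auto
  have tr: "trans R" and tot: "\<forall>i\<in>U. \<forall>j\<in>U. i \<noteq> j \<longrightarrow> (i,j) \<in> R \<or> (j,i) \<in> R"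
    using R by (auto simp: Rels_def)
  show ?case
  proof (cases "(i,a) \<in> R")
    case True
    have "\<forall>j\<in>insert a V. j \<noteq> a \<longrightarrow> (j,a) \<in> R"
      using i True tr by (auto dest: transD)
    then show ?thesis by auto
  next
    case False
    have "a \<noteq> i" using insert i by auto
    then have "(a,i) \<in> R" using tot False insert i by auto
    then show ?thesis using i by auto
  qed
qed

lemma topc_nonempty: "R \<in> Rels U \<Longrightarrow> finite U \<Longrightarrow> U \<noteq> {} \<Longrightarrow> topc R U \<noteq> {}"
  using topc_ne[of R U U] by (auto simp: topc_def)

lemma card1_eq: "card T = 1 \<Longrightarrow> i \<in> T \<Longrightarrow> j \<in> T \<Longrightarrow> i = j"
  by (metis card_1_singletonE singletonD)

lemma build_Rels:
  assumes U: "finite U" and T: "T \<subseteq> U" "T \<noteq> {}" and R': "R' \<in> Rels (U - T)"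
    and b: "card T \<noteq> 1 \<Longrightarrow> b"
  shows "build U T R' b \<in> Rels U" "topc (build U T R' b) U = T"
    "build U T R' b \<inter> (U - T) \<times> (U - T) = R'" "(\<exists>t\<in>T. (t,t) \<in> build U T R' b) = b"
proof -
  have R'sub: "R' \<subseteq> (U - T) \<times> (U - T)" and trR': "trans R'"
    and totR': "\<forall>i\<in>U-T. \<forall>j\<in>U-T. i \<noteq> j \<longrightarrow> (i,j) \<in> R' \<or> (j,i) \<in> R'"
    using R' by (auto simp: Rels_def)
  have two: "b" if "i \<in> T" "j \<in> T" "i \<noteq> j" for i j
    using b card1_eq[of T i j] that by blast
  let ?R = "build U T R' b"
  show "?R \<in> Rels U"
    unfolding Rels_def
  proof (intro CollectI conjI ballI impI)
    show "?R \<subseteq> U \<times> U" using R'sub T by (auto simp: build_def)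
    show "trans ?R"
    proof (rule transI)
      fix x y z assume "(x,y) \<in> ?R" "(y,z) \<in> ?R"
      then show "(x,z) \<in> ?R"
        using R'sub trR' unfolding build_def by (auto split: if_splits dest: transD)
    qed
    fix i j assume "i \<in> U" "j \<in> U" "i \<noteq> j"
    then show "(i,j) \<in> ?R \<or> (j,i) \<in> ?R"
      using totR' two unfolding build_def by (cases "i \<in> T"; cases "j \<in> T") auto
  qed
  show "topc ?R U = T"
  proof
    show "topc ?R U \<subseteq> T"
    proof
      fix i assume i: "i \<in> topc ?R U"
      show "i \<in> T"
      proof (rule ccontr)
        assume "i \<notin> T"
        obtain t where "t \<in> T" using T by auto
        then have "(t,i) \<notin> ?R" using R'sub \<open>i \<notin> T\<close> by (auto simp: build_def)
        moreover have "t \<in> U" "t \<noteq> i" using \<open>t \<in> T\<close> T \<open>i \<notin> T\<close> by auto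
        ultimately show False using i by (auto simp: topc_def)
      qed
    qed
    show "T \<subseteq> topc ?R U"
      using T two by (auto simp: topc_def build_def)
  qed
  show "?R \<inter> (U - T) \<times> (U - T) = R'"
    using R'sub by (auto simp: build_def)
  show "(\<exists>t\<in>T. (t,t) \<in> ?R) = b"
    using T R'sub by (auto simp: build_def)
qed

lemma Rels_decomp:
  assumes U: "finite U" and R: "R \<in> Rels U" and T: "topc R U = T" "T \<noteq> {}"
  shows "R \<inter> (U - T) \<times> (U - T) \<in> Rels (U - T)"
    "card T \<noteq> 1 \<Longrightarrow> (\<exists>t\<in>T. (t,t) \<in> R)"
    "R = build U T (R \<inter> (U - T) \<times> (U - T)) (\<exists>t\<in>T. (t,t) \<in> R)"
proof -
  have Rsub: "R \<subseteq> U \<times> U" and tr: "trans R"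
    and tot: "\<forall>i\<in>U. \<forall>j\<in>U. i \<noteq> j \<longrightarrow> (i,j) \<in> R \<or> (j,i) \<in> R"
    using R by (auto simp: Rels_def)
  have top: "\<And>i j. i \<in> T \<Longrightarrow> j \<in> U \<Longrightarrow> j \<noteq> i \<Longrightarrow> (j,i) \<in> R" and TU: "T \<subseteq> U"
    using T(1) unfolding topc_def by blast+
  have "trans (R \<inter> (U - T) \<times> (U - T))"
  proof (rule transI)
    fix x y z assume "(x,y) \<in> R \<inter> (U - T) \<times> (U - T)" "(y,z) \<in> R \<inter> (U - T) \<times> (U - T)"
    then show "(x,z) \<in> R \<inter> (U - T) \<times> (U - T)" using transD[OF tr, of x y z] by blast
  qed
  then show "R \<inter> (U - T) \<times> (U - T) \<in> Rels (U - T)"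
    unfolding Rels_def using tot by blast
  have refl2: "(t,t) \<in> R" if c1: "card T \<noteq> 1" and tT: "t \<in> T" for t
  proof -
    have "finite T" using TU U finite_subset by blast
    then have "card T \<noteq> 0" using T(2) by simp
    have "T - {t} \<noteq> {}"
    proof
      assume "T - {t} = {}"
      then have "T = {t}" using tT by auto
      then show False using c1 by simp
    qed
    then obtain s where "s \<in> T" "s \<noteq> t" by auto
    then have "(s,t) \<in> R" "(t,s) \<in> R" using top TU tT by auto
    then show ?thesis using tr by (auto dest: transD)
  qed
  show "card T \<noteq> 1 \<Longrightarrow> (\<exists>t\<in>T. (t,t) \<in> R)" using refl2 T(2) by auto
  have notTU: "(x,y) \<notin> R" if "x \<in> T" "y \<in> U" "y \<notin> T" for x y
  proof
    assume xy: "(x,y) \<in> R"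
    from that T(1) obtain j where j: "j \<in> U" "j \<noteq> y" "(j,y) \<notin> R" unfolding topc_def by blast
    show False
    proof (cases "j = x")
      case True then show False using xy j by simp
    next
      case False
      then have "(j,x) \<in> R" using top that j by auto
      then show False using xy j tr by (auto dest: transD)
    qed
  qed
  have TT: "(x,y) \<in> R \<longleftrightarrow> (\<exists>t\<in>T. (t,t) \<in> R)" if "x \<in> T" "y \<in> T" for x y
  proof (cases "card T = 1")
    case True
    have "x = y" using card1_eq[OF True that] .
    moreover have "\<forall>t\<in>T. t = x" using card1_eq[OF True _ that(1)] by blast
    ultimately have "T = {x}" "x = y" using that by blast+
    then show ?thesis by simp
  next
    case False
    show ?thesis
    proof (cases "x = y")
      case True then show ?thesis using refl2[OF False] that by blast
    next
      case xy: False
      then have "(x,y) \<in> R" using top[of y x] that TU by blast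
      then show ?thesis using refl2[OF False] that by blast
    qed
  qed
  show "R = build U T (R \<inter> (U - T) \<times> (U - T)) (\<exists>t\<in>T. (t,t) \<in> R)"
  proof (rule set_eqI, clarify)
    fix x y
    show "(x,y) \<in> R \<longleftrightarrow> (x,y) \<in> build U T (R \<inter> (U - T) \<times> (U - T)) (\<exists>t\<in>T. (t,t) \<in> R)"
    proof (cases "x \<in> U \<and> y \<in> U")
      case False then show ?thesis using Rsub TU by (auto simp: build_def)
    next
      case True
      show ?thesis
      proof (cases "x \<in> T")
        case xT: True
        show ?thesis
        proof (cases "y \<in> T")
          case True then show ?thesis using xT TT[of x y] unfolding build_def by auto
        next
          case False then show ?thesis using xT notTU[of x y] True unfolding build_def by auto
        qed
      next
        case xT: False
        show ?thesis
        proof (cases "y \<in> T")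
          case yT: True
          have "x \<noteq> y" using xT yT by auto
          then show ?thesis using xT yT top[of y x] True unfolding build_def by auto
        next
          case False then show ?thesis using xT True unfolding build_def by auto
        qed
      qed
    qed
  qed
qed

lemma card_top_class:
  assumes U: "finite U" and T: "T \<subseteq> U" "T \<noteq> {}"
  shows "card {R \<in> Rels U. topc R U = T} = (if card T = 1 then 2 else 1) * card (Rels (U - T))"
proof -
  define B where "B = (if card T = 1 then (UNIV :: bool set) else {True})"
  have "{R \<in> Rels U. topc R U = T} = (\<lambda>(R',b). build U T R' b) ` (Rels (U - T) \<times> B)"
  proof
    show "{R \<in> Rels U. topc R U = T} \<subseteq> (\<lambda>(R',b). build U T R' b) ` (Rels (U - T) \<times> B)"
    proof
      fix R assume "R \<in> {R \<in> Rels U. topc R U = T}"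
      then have R: "R \<in> Rels U" "topc R U = T" by auto
      note d = Rels_decomp[OF U R T(2)]
      have "(R \<inter> (U - T) \<times> (U - T), \<exists>t\<in>T. (t,t) \<in> R) \<in> Rels (U - T) \<times> B"
        using d(1,2) by (auto simp: B_def)
      moreover have "R = (\<lambda>(R',b). build U T R' b) (R \<inter> (U - T) \<times> (U - T), \<exists>t\<in>T. (t,t) \<in> R)"
        using d(3) by simp
      ultimately show "R \<in> (\<lambda>(R',b). build U T R' b) ` (Rels (U - T) \<times> B)"
        by (rule rev_image_eqI)
    qed
    show "(\<lambda>(R',b). build U T R' b) ` (Rels (U - T) \<times> B) \<subseteq> {R \<in> Rels U. topc R U = T}"
      using build_Rels[OF U T] by (auto simp: B_def split: if_splits)
  qed
  moreover have "inj_on (\<lambda>(R',b). build U T R' b) (Rels (U - T) \<times> B)"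
  proof (rule inj_onI)
    fix p1 p2 assume h: "p1 \<in> Rels (U - T) \<times> B" "p2 \<in> Rels (U - T) \<times> B"
      "(\<lambda>(R',b). build U T R' b) p1 = (\<lambda>(R',b). build U T R' b) p2"
    obtain R1 b1 where p1: "p1 = (R1,b1)" by (cases p1)
    obtain R2 b2 where p2: "p2 = (R2,b2)" by (cases p2)
    have r1: "R1 \<in> Rels (U - T)" "R2 \<in> Rels (U - T)" using h p1 p2 by auto
    have c1: "card T \<noteq> 1 \<Longrightarrow> b1" "card T \<noteq> 1 \<Longrightarrow> b2" using h p1 p2 by (auto simp: B_def split: if_splits)
    have e: "build U T R1 b1 = build U T R2 b2" using h p1 p2 by simp
    have "R1 = R2"
      using build_Rels(3)[OF U T r1(1) c1(1)] build_Rels(3)[OF U T r1(2) c1(2)] e by simp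
    moreover have "b1 = b2"
      using build_Rels(4)[OF U T r1(1) c1(1)] build_Rels(4)[OF U T r1(2) c1(2)] e by simp
    ultimately show "p1 = p2" using p1 p2 by simp
  qed
  moreover have "finite (Rels (U - T))" using U by (simp add: Rels_finite)
  ultimately show ?thesis
    by (simp add: card_image card_cartesian_product B_def)
qed

lemma card_Rels: "finite U \<Longrightarrow> card (Rels U) = J (card U)"
proof (induction "card U" arbitrary: U rule: less_induct)
  case less
  show ?case
  proof (cases "U = {}")
    case True then show ?thesis by (simp add: Rels_empty)
  next
    case False
    then obtain n where n: "card U = Suc n" using less.prems
      by (metis card_0_eq not0_implies_Suc)
    define w where "w = (\<lambda>i. (if i = 1 then 2 else 1) * J (card U - i))"
    have "card (Rels U) = (\<Sum>T\<in>Pow U - {{}}. card {R \<in> Rels U. topc R U = T})"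
    proof -
      have "card (Rels U) = (\<Sum>R\<in>Rels U. 1)" by simp
      also have "\<dots> = (\<Sum>T\<in>Pow U - {{}}. \<Sum>R\<in>{R \<in> Rels U. topc R U = T}. 1)"
      proof (rule sum.group[symmetric])
        show "finite (Rels U)" using less.prems by (rule Rels_finite)
        show "finite (Pow U - {{}})" using less.prems by simp
        have "topc R U \<subseteq> U" for R by (auto simp: topc_def)
        then show "(\<lambda>R. topc R U) ` Rels U \<subseteq> Pow U - {{}}"
          using topc_nonempty[OF _ less.prems False] by blast
      qed
      finally show ?thesis by simp
    qed
    also have "\<dots> = (\<Sum>T\<in>Pow U - {{}}. w (card T))"
    proof (rule sum.cong[OF refl])
      fix T assume T: "T \<in> Pow U - {{}}"
      then have TU: "T \<subseteq> U" "T \<noteq> {}" by auto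
      have fT: "finite T" using TU less.prems finite_subset by auto
      have "card T > 0" using fT TU by auto
      moreover have "card T \<le> card U" using card_mono[OF less.prems TU(1)] .
      ultimately have "card (U - T) < card U"
        unfolding card_Diff_subset[OF fT TU(1)] by linarith
      then have "card (Rels (U - T)) = J (card (U - T))" using less by auto
      then show "card {R \<in> Rels U. topc R U = T} = w (card T)"
        using card_top_class[OF less.prems TU] card_Diff_subset[OF fT TU(1)] by (simp add: w_def)
    qed
    also have "\<dots> = (\<Sum>T\<in>Pow U. w (card T)) - w 0"
    proof -
      have "(\<Sum>T\<in>Pow U. w (card T)) = w (card {}) + (\<Sum>T\<in>Pow U - {{}}. w (card T))"
        using less.prems by (subst sum.remove[of _ "{}"]) auto
      then show ?thesis by simp
    qed
    also have "(\<Sum>T\<in>Pow U. w (card T)) = (\<Sum>i=0..card U. (card U choose i) * w i)"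
      by (rule sum_Pow_card[OF less.prems])
    also have "\<dots> = w 0 + (Suc n * (2 * J n) + (\<Sum>i=2..Suc n. (Suc n choose i) * J (Suc n - i)))"
    proof -
      have s1: "{0..Suc n} = insert 0 (insert 1 {2..Suc n})" by auto
      have "(\<Sum>i=0..card U. (card U choose i) * w i) = w 0 + ((Suc n choose 1) * w 1 + (\<Sum>i=2..Suc n. (Suc n choose i) * w i))"
        unfolding n s1 by (subst sum.insert; simp)+
      moreover have "(\<Sum>i=2..Suc n. (Suc n choose i) * w i) = (\<Sum>i=2..Suc n. (Suc n choose i) * J (Suc n - i))"
        by (rule sum.cong) (auto simp: w_def n)
      ultimately show ?thesis by (simp add: w_def n)
    qed
    finally show ?thesis using n by (simp add: algebra_simps)
  qed
qed


lemma card_iso_types_inv: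
  assumes "\<And>S T. P S \<Longrightarrow> P T \<Longrightarrow> rel S T \<longleftrightarrow> f S = f T"
  shows "card (iso_types P rel) = card (f ` {S. P S})"
proof -
  have "iso_types P rel = (\<lambda>v. {T. P T \<and> f T = v}) ` (f ` {S. P S})"
  proof
    show "iso_types P rel \<subseteq> (\<lambda>v. {T. P T \<and> f T = v}) ` (f ` {S. P S})"
    proof
      fix X assume "X \<in> iso_types P rel"
      then obtain S where S: "P S" "X = {T. P T \<and> rel S T}" unfolding iso_types_def by blast
      then have "X = {T. P T \<and> f T = f S}" using assms by auto
      then show "X \<in> (\<lambda>v. {T. P T \<and> f T = v}) ` (f ` {S. P S})" using S(1) by blast
    qed
    show "(\<lambda>v. {T. P T \<and> f T = v}) ` (f ` {S. P S}) \<subseteq> iso_types P rel"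
    proof
      fix X assume "X \<in> (\<lambda>v. {T. P T \<and> f T = v}) ` (f ` {S. P S})"
      then obtain S where S: "P S" "X = {T. P T \<and> f T = f S}" by blast
      then have "X = {T. P T \<and> rel S T}" using assms by auto
      then show "X \<in> iso_types P rel" using S(1) unfolding iso_types_def by blast
    qed
  qed
  moreover have "inj_on (\<lambda>v. {T. P T \<and> f T = v}) (f ` {S. P S})"
  proof (rule inj_onI)
    fix v w assume "v \<in> f ` {S. P S}" "w \<in> f ` {S. P S}" "{T. P T \<and> f T = v} = {T. P T \<and> f T = w}"
    then show "v = w" by blast
  qed
  ultimately show ?thesis by (simp add: card_image)
qed

definition IS :: "nat \<Rightarrow> (nat set \<times> (nat \<times> nat) set) set" where
  "IS k = {(U,R). U \<subseteq> {..<k} \<and> R \<in> Rels U}"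

lemma card_IS: "card (IS k) = (\<Sum>i=0..k. J i * (k choose i))"
proof -
  have "IS k = Sigma (Pow {..<k}) Rels" by (auto simp: IS_def)
  then have "card (IS k) = (\<Sum>U\<in>Pow {..<k}. card (Rels U))"
    by (simp add: card_SigmaI Rels_finite finite_subset)
  also have "\<dots> = (\<Sum>U\<in>Pow {..<k}. J (card U))"
    by (rule sum.cong) (auto simp: card_Rels finite_subset)
  also have "\<dots> = (\<Sum>i=0..k. (k choose i) * J i)"
    using sum_Pow_card[of "{..<k}" J] by simp
  finally show ?thesis by (simp add: mult.commute)
qed

lemma card_IS_all: "card {v \<in> IS k. fst v = {..<k}} = J k"
proof -
  have "{v \<in> IS k. fst v = {..<k}} = (\<lambda>R. ({..<k}, R)) ` Rels {..<k}"
    by (auto simp: IS_def)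
  moreover have "inj_on (\<lambda>R. ({..<k}, R)) (Rels {..<k})" by (auto intro: inj_onI)
  ultimately show ?thesis by (simp add: card_image card_Rels)
qed


definition labm :: "(nat \<Rightarrow> nat \<Rightarrow> bool) \<Rightarrow> (nat \<Rightarrow> nat \<Rightarrow> bool) \<Rightarrow> nat \<Rightarrow> nat \<Rightarrow> bool" where
  "labm R S i x \<longleftrightarrow> R i x \<or> S i x"

definition Um :: "nat \<Rightarrow> nat set \<Rightarrow> (nat \<Rightarrow> nat \<Rightarrow> bool) \<Rightarrow> (nat \<Rightarrow> nat \<Rightarrow> bool) \<Rightarrow> nat set" where
  "Um k A R S = {i. i < k \<and> (\<exists>x\<in>A. labm R S i x)}"

definition Relm :: "nat \<Rightarrow> nat set \<Rightarrow> (nat \<Rightarrow> nat \<Rightarrow> bool) \<Rightarrow> (nat \<Rightarrow> nat \<Rightarrow> bool) \<Rightarrow> (nat \<Rightarrow> nat \<Rightarrow> bool) \<Rightarrow> (nat \<times> nat) set" where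
  "Relm k A lt R S = {(i,j). i < k \<and> j < k \<and> (\<exists>x\<in>A. \<exists>y\<in>A. labm R S i x \<and> labm R S j y \<and>
      (lt x y \<or> (x = y \<and> (\<exists>l<k. S l x))))}"

definition inv_m :: "nat \<Rightarrow> tstr \<Rightarrow> nat set \<times> (nat \<times> nat) set" where
  "inv_m k M = (case M of (A, lt, R, S) \<Rightarrow> (Um k A R S, Relm k A lt R S))"

definition elt :: "nat set \<Rightarrow> (nat \<Rightarrow> nat \<Rightarrow> bool) \<Rightarrow> (nat \<Rightarrow> nat \<Rightarrow> bool) \<Rightarrow> nat \<Rightarrow> nat" where
  "elt A R S i = (THE x. x \<in> A \<and> labm R S i x)"

locale tmodel =
  fixes k :: nat and A :: "nat set" and lt :: "nat \<Rightarrow> nat \<Rightarrow> bool" and R S :: "nat \<Rightarrow> nat \<Rightarrow> bool"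
  assumes M: "is_model_T k (A, lt, R, S)"
begin

lemma ax:
  "strict_linear_on A lt"
  "\<And>x. x \<in> A \<Longrightarrow> (\<exists>i<k. R i x) \<or> (\<exists>i<k. S i x)"
  "\<And>x i j. x \<in> A \<Longrightarrow> i < k \<Longrightarrow> j < k \<Longrightarrow> R i x \<Longrightarrow> R j x \<Longrightarrow> i = j"
  "\<And>x i j. x \<in> A \<Longrightarrow> i < k \<Longrightarrow> j < k \<Longrightarrow> R i x \<Longrightarrow> S j x \<Longrightarrow> False"
  "\<And>x y i. i < k \<Longrightarrow> x \<in> A \<Longrightarrow> y \<in> A \<Longrightarrow> R i x \<Longrightarrow> R i y \<Longrightarrow> x = y"
  "\<And>x y i. i < k \<Longrightarrow> x \<in> A \<Longrightarrow> y \<in> A \<Longrightarrow> S i x \<Longrightarrow> S i y \<Longrightarrow> x = y"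
  "\<And>x y i. i < k \<Longrightarrow> x \<in> A \<Longrightarrow> y \<in> A \<Longrightarrow> R i x \<Longrightarrow> S i y \<Longrightarrow> False"
  using M unfolding is_model_T_def by (simp_all, blast+)

lemma irr: "x \<in> A \<Longrightarrow> \<not> lt x x"
  using ax(1) unfolding strict_linear_on_def by blast
lemma trn: "x \<in> A \<Longrightarrow> y \<in> A \<Longrightarrow> z \<in> A \<Longrightarrow> lt x y \<Longrightarrow> lt y z \<Longrightarrow> lt x z"
  using ax(1) unfolding strict_linear_on_def by blast
lemma tot: "x \<in> A \<Longrightarrow> y \<in> A \<Longrightarrow> x \<noteq> y \<Longrightarrow> lt x y \<or> lt y x"
  using ax(1) unfolding strict_linear_on_def by blast

lemma haslab: "x \<in> A \<Longrightarrow> \<exists>i<k. labm R S i x"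
  using ax(2) unfolding labm_def by blast

lemma uniq: "i < k \<Longrightarrow> x \<in> A \<Longrightarrow> y \<in> A \<Longrightarrow> labm R S i x \<Longrightarrow> labm R S i y \<Longrightarrow> x = y"
  unfolding labm_def using ax(5,6,7) by blast

lemma twoS: "x \<in> A \<Longrightarrow> i < k \<Longrightarrow> j < k \<Longrightarrow> i \<noteq> j \<Longrightarrow> labm R S i x \<Longrightarrow> labm R S j x \<Longrightarrow> S i x"
  unfolding labm_def using ax(3,4) by blast

lemma elt: "i \<in> Um k A R S \<Longrightarrow> elt A R S i \<in> A \<and> labm R S i (elt A R S i)"
  unfolding Um_def elt_def
  by (rule theI') (use uniq in blast)

lemma lab_iff: "x \<in> A \<Longrightarrow> i < k \<Longrightarrow> labm R S i x \<longleftrightarrow> i \<in> Um k A R S \<and> x = elt A R S i"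
proof
  assume "x \<in> A" "i < k" "labm R S i x"
  then have "i \<in> Um k A R S" unfolding Um_def by blast
  with elt[OF this] uniq \<open>x \<in> A\<close> \<open>i < k\<close> \<open>labm R S i x\<close> show "i \<in> Um k A R S \<and> x = elt A R S i" by blast
next
  assume "i \<in> Um k A R S \<and> x = elt A R S i"
  then show "labm R S i x" using elt by blast
qed

abbreviation Sel :: "nat \<Rightarrow> bool" where "Sel x \<equiv> \<exists>l<k. S l x"

lemma Um_sub: "Um k A R S \<subseteq> {..<k}" unfolding Um_def by auto

lemma Rel_iff:
  assumes "i \<in> Um k A R S" "j \<in> Um k A R S"
  shows "(i,j) \<in> Relm k A lt R S \<longleftrightarrow> lt (elt A R S i) (elt A R S j) \<or> (elt A R S i = elt A R S j \<and> Sel (elt A R S i))"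
proof -
  have ik: "i < k" "j < k" using assms Um_sub by auto
  show ?thesis
  proof
    assume "(i,j) \<in> Relm k A lt R S"
    then obtain x y where xy: "x \<in> A" "y \<in> A" "labm R S i x" "labm R S j y" "lt x y \<or> (x = y \<and> Sel x)"
      unfolding Relm_def by blast
    have "x = elt A R S i" "y = elt A R S j" using lab_iff xy ik by blast+
    then show "lt (elt A R S i) (elt A R S j) \<or> (elt A R S i = elt A R S j \<and> Sel (elt A R S i))" using xy by blast
  next
    assume h: "lt (elt A R S i) (elt A R S j) \<or> (elt A R S i = elt A R S j \<and> Sel (elt A R S i))"
    show "(i,j) \<in> Relm k A lt R S"
      unfolding Relm_def using ik elt[OF assms(1)] elt[OF assms(2)] h by blast
  qed
qed

lemma Relm_sub: "Relm k A lt R S \<subseteq> Um k A R S \<times> Um k A R S"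
  unfolding Relm_def Um_def by blast

lemma same_iff:
  assumes "i \<in> Um k A R S" "j \<in> Um k A R S"
  shows "elt A R S i = elt A R S j \<longleftrightarrow> i = j \<or> ((i,j) \<in> Relm k A lt R S \<and> (j,i) \<in> Relm k A lt R S)"
proof -
  have ik: "i < k" "j < k" using assms Um_sub by auto
  note ei = elt[OF assms(1)] and ej = elt[OF assms(2)]
  show ?thesis
  proof
    assume e: "elt A R S i = elt A R S j"
    show "i = j \<or> ((i,j) \<in> Relm k A lt R S \<and> (j,i) \<in> Relm k A lt R S)"
    proof (cases "i = j")
      case False
      have "S i (elt A R S i)" using twoS[of "elt A R S i" i j] ei ej e ik False by simp
      then have "Sel (elt A R S i)" using ik by blast
      then show ?thesis using Rel_iff[OF assms] Rel_iff[OF assms(2,1)] e by simp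
    qed simp
  next
    assume h: "i = j \<or> ((i,j) \<in> Relm k A lt R S \<and> (j,i) \<in> Relm k A lt R S)"
    show "elt A R S i = elt A R S j"
    proof (rule ccontr)
      assume ne: "elt A R S i \<noteq> elt A R S j"
      then have "i \<noteq> j" by auto
      with h have "lt (elt A R S i) (elt A R S j)" "lt (elt A R S j) (elt A R S i)"
        using Rel_iff[OF assms] Rel_iff[OF assms(2,1)] ne by auto
      then show False using trn irr ei ej by blast
    qed
  qed
qed

lemma lt_iff:
  assumes "i \<in> Um k A R S" "j \<in> Um k A R S"
  shows "lt (elt A R S i) (elt A R S j) \<longleftrightarrow> (i,j) \<in> Relm k A lt R S \<and> \<not> (i = j \<or> ((i,j) \<in> Relm k A lt R S \<and> (j,i) \<in> Relm k A lt R S))"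
proof -
  note ei = elt[OF assms(1)] and ej = elt[OF assms(2)]
  show ?thesis
  proof
    assume l: "lt (elt A R S i) (elt A R S j)"
    then have "elt A R S i \<noteq> elt A R S j" using irr ei by auto
    then show "(i,j) \<in> Relm k A lt R S \<and> \<not> (i = j \<or> ((i,j) \<in> Relm k A lt R S \<and> (j,i) \<in> Relm k A lt R S))"
      using Rel_iff[OF assms] same_iff[OF assms] l by blast
  next
    assume h: "(i,j) \<in> Relm k A lt R S \<and> \<not> (i = j \<or> ((i,j) \<in> Relm k A lt R S \<and> (j,i) \<in> Relm k A lt R S))"
    then have "elt A R S i \<noteq> elt A R S j" using same_iff[OF assms] by blast
    then show "lt (elt A R S i) (elt A R S j)" using Rel_iff[OF assms] h by blast
  qed
qed

lemma R_iff: "x \<in> A \<Longrightarrow> l < k \<Longrightarrow> R l x \<longleftrightarrow> l \<in> Um k A R S \<and> x = elt A R S l \<and> (l,l) \<notin> Relm k A lt R S"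
proof
  assume h: "x \<in> A" "l < k" "R l x"
  then have lx: "labm R S l x" by (simp add: labm_def)
  then have u: "l \<in> Um k A R S" "x = elt A R S l" using lab_iff h by blast+
  have "\<not> Sel x" using ax(4) h by blast
  moreover have "\<not> lt x x" using irr h by blast
  ultimately have "(l,l) \<notin> Relm k A lt R S" using Rel_iff[OF u(1) u(1)] u(2) by blast
  then show "l \<in> Um k A R S \<and> x = elt A R S l \<and> (l,l) \<notin> Relm k A lt R S" using u by blast
next
  assume h: "l \<in> Um k A R S \<and> x = elt A R S l \<and> (l,l) \<notin> Relm k A lt R S"
  then have "\<not> Sel x" using Rel_iff[of l l] by blast
  moreover have "labm R S l x" using h elt by blast
  moreover have "l < k" using h Um_sub by auto
  ultimately show "R l x" unfolding labm_def by blast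
qed

lemma S_iff: "x \<in> A \<Longrightarrow> l < k \<Longrightarrow> S l x \<longleftrightarrow> l \<in> Um k A R S \<and> x = elt A R S l \<and> (l,l) \<in> Relm k A lt R S"
proof
  assume h: "x \<in> A" "l < k" "S l x"
  then have lx: "labm R S l x" by (simp add: labm_def)
  then have u: "l \<in> Um k A R S" "x = elt A R S l" using lab_iff h by blast+
  have "Sel x" using h by blast
  then have "(l,l) \<in> Relm k A lt R S" using Rel_iff[OF u(1) u(1)] u(2) by blast
  then show "l \<in> Um k A R S \<and> x = elt A R S l \<and> (l,l) \<in> Relm k A lt R S" using u by blast
next
  assume h: "l \<in> Um k A R S \<and> x = elt A R S l \<and> (l,l) \<in> Relm k A lt R S"
  have xA: "x \<in> A" using h elt by blast
  have "lt x x \<or> Sel x" using Rel_iff[of l l] h by blast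
  then have "Sel x" using irr xA by blast
  moreover have "labm R S l x" using h elt by blast
  moreover have "l < k" using h Um_sub by auto
  ultimately show "S l x" unfolding labm_def using ax(4) xA by blast
qed

lemma inv_IS: "(Um k A R S, Relm k A lt R S) \<in> IS k"
  unfolding IS_def Rels_def
proof (intro CollectI case_prodI conjI Um_sub Relm_sub)
  show "trans (Relm k A lt R S)"
  proof (rule transI)
    fix i j l assume a: "(i,j) \<in> Relm k A lt R S" "(j,l) \<in> Relm k A lt R S"
    then have u: "i \<in> Um k A R S" "j \<in> Um k A R S" "l \<in> Um k A R S" using Relm_sub by blast+
    note e = elt[OF u(1)] elt[OF u(2)] elt[OF u(3)]
    have "lt (elt A R S i) (elt A R S j) \<or> (elt A R S i = elt A R S j \<and> Sel (elt A R S i))"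
      "lt (elt A R S j) (elt A R S l) \<or> (elt A R S j = elt A R S l \<and> Sel (elt A R S j))"
      using a Rel_iff u by blast+
    then have "lt (elt A R S i) (elt A R S l) \<or> (elt A R S i = elt A R S l \<and> Sel (elt A R S i))"
      using trn e by metis
    then show "(i,l) \<in> Relm k A lt R S" using Rel_iff u by blast
  qed
  show "\<forall>i\<in>Um k A R S. \<forall>j\<in>Um k A R S. i \<noteq> j \<longrightarrow> (i,j) \<in> Relm k A lt R S \<or> (j,i) \<in> Relm k A lt R S"
  proof (intro ballI impI)
    fix i j assume u: "i \<in> Um k A R S" "j \<in> Um k A R S" "i \<noteq> j"
    show "(i,j) \<in> Relm k A lt R S \<or> (j,i) \<in> Relm k A lt R S"
    proof (cases "elt A R S i = elt A R S j")
      case True then show ?thesis using same_iff[OF u(1,2)] u(3) by blast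
    next
      case False
      then have "lt (elt A R S i) (elt A R S j) \<or> lt (elt A R S j) (elt A R S i)"
        using tot elt u by blast
      then show ?thesis using Rel_iff u by blast
    qed
  qed
qed

end


lemma T_iso_sym:
  assumes "T_iso k (A, lt, R, S) (B, lt', R', S')"
  shows "T_iso k (B, lt', R', S') (A, lt, R, S)"
proof -
  obtain f where f: "bij_betw f A B" "\<forall>x\<in>A. \<forall>y\<in>A. lt x y \<longleftrightarrow> lt' (f x) (f y)"
    "\<forall>i<k. \<forall>x\<in>A. R i x \<longleftrightarrow> R' i (f x)" "\<forall>i<k. \<forall>x\<in>A. S i x \<longleftrightarrow> S' i (f x)"
    using assms unfolding T_iso_def by auto
  define g where "g = inv_into A f"
  have g: "bij_betw g B A" unfolding g_def by (rule bij_betw_inv_into[OF f(1)])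
  have fg: "y \<in> B \<Longrightarrow> f (g y) = y" for y unfolding g_def using f(1)
    by (simp add: bij_betw_inv_into_right)
  have gB: "y \<in> B \<Longrightarrow> g y \<in> A" for y using g bij_betwE by blast
  show ?thesis unfolding T_iso_def
  proof (simp, intro exI[of _ g] conjI g ballI allI impI)
    fix x y assume "x \<in> B" "y \<in> B"
    then show "lt' x y = lt (g x) (g y)" using f(2) gB fg by metis
  next
    fix i x assume "i < k" "x \<in> B"
    then show "R' i x = R i (g x)" "S' i x = S i (g x)" using f(3,4) gB fg by metis+
  qed
qed

lemma T_iso_sub:
  assumes "T_iso k (A, lt, R, S) (B, lt', R', S')"
  shows "Um k A R S \<subseteq> Um k B R' S'" "Relm k A lt R S \<subseteq> Relm k B lt' R' S'"
proof -
  obtain f where f: "bij_betw f A B" "\<forall>x\<in>A. \<forall>y\<in>A. lt x y \<longleftrightarrow> lt' (f x) (f y)"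
    "\<forall>i<k. \<forall>x\<in>A. R i x \<longleftrightarrow> R' i (f x)" "\<forall>i<k. \<forall>x\<in>A. S i x \<longleftrightarrow> S' i (f x)"
    using assms unfolding T_iso_def by auto
  have fA: "x \<in> A \<Longrightarrow> f x \<in> B" for x using f(1) bij_betwE by blast
  have lab: "i < k \<Longrightarrow> x \<in> A \<Longrightarrow> labm R S i x \<longleftrightarrow> labm R' S' i (f x)" for i x
    using f(3,4) by (simp add: labm_def)
  show "Um k A R S \<subseteq> Um k B R' S'"
    unfolding Um_def using lab fA by blast
  show "Relm k A lt R S \<subseteq> Relm k B lt' R' S'"
  proof
    fix p assume "p \<in> Relm k A lt R S"
    then obtain i j x y where p: "p = (i,j)" "i < k" "j < k" "x \<in> A" "y \<in> A" "labm R S i x" "labm R S j y"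
      "lt x y \<or> (x = y \<and> (\<exists>l<k. S l x))" unfolding Relm_def by blast
    have "lt' (f x) (f y) \<or> (f x = f y \<and> (\<exists>l<k. S' l (f x)))"
      using p(4,5,8) f(2,4) by blast
    then show "p \<in> Relm k B lt' R' S'"
      unfolding Relm_def using p lab fA by blast
  qed
qed

lemma T_iso_inv:
  assumes "T_iso k M N"
  shows "inv_m k M = inv_m k N"
proof -
  obtain A lt R S where M: "M = (A, lt, R, S)" by (cases M) auto
  obtain B lt' R' S' where N: "N = (B, lt', R', S')" by (cases N) auto
  have i1: "T_iso k (A, lt, R, S) (B, lt', R', S')" using assms M N by simp
  note i2 = T_iso_sym[OF i1]
  show ?thesis unfolding M N inv_m_def
    using T_iso_sub[OF i1] T_iso_sub[OF i2] by auto
qed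

lemma inv_T_iso:
  assumes MM: "is_model_T k (A, lt, R, S)" and NN: "is_model_T k (B, lt', R', S')"
    and eq: "inv_m k (A, lt, R, S) = inv_m k (B, lt', R', S')"
  shows "T_iso k (A, lt, R, S) (B, lt', R', S')"
proof -
  interpret m: tmodel k A lt R S by (rule tmodel.intro[OF MM])
  interpret n: tmodel k B lt' R' S' by (rule tmodel.intro[OF NN])
  define U where "U = Um k A R S"
  define Rl where "Rl = Relm k A lt R S"
  have U2: "Um k B R' S' = U" and Rl2: "Relm k B lt' R' S' = Rl"
    using eq by (auto simp: inv_m_def U_def Rl_def)
  define eM where "eM = elt A R S"
  define eN where "eN = elt B R' S'"
  have sameMN: "eM i = eM j \<longleftrightarrow> eN i = eN j" if "i \<in> U" "j \<in> U" for i j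
    using m.same_iff[of i j] n.same_iff[of i j] that U2 Rl2 by (simp add: U_def Rl_def eM_def eN_def)
  have eMA: "i \<in> U \<Longrightarrow> eM i \<in> A" for i using m.elt by (simp add: U_def eM_def)
  have eNB: "i \<in> U \<Longrightarrow> eN i \<in> B" for i using n.elt U2 by (simp add: eN_def)
  have reprM: "x \<in> A \<Longrightarrow> \<exists>i\<in>U. x = eM i" for x
    using m.haslab m.lab_iff unfolding U_def eM_def by blast
  have reprN: "y \<in> B \<Longrightarrow> \<exists>i\<in>U. y = eN i" for y
    using n.haslab n.lab_iff U2 unfolding eN_def by blast
  define f where "f = (\<lambda>x. eN (SOME i. i < k \<and> labm R S i x))"
  have f_elt: "f (eM i) = eN i" if "i \<in> U" for i
  proof -
    have ik: "i < k" using that m.Um_sub U_def by auto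
    have ex: "\<exists>j. j < k \<and> labm R S j (eM i)" using m.elt[of i] that ik by (auto simp: U_def eM_def)
    define j where "j = (SOME j. j < k \<and> labm R S j (eM i))"
    have j: "j < k" "labm R S j (eM i)" using someI_ex[OF ex] unfolding j_def by blast+
    have "j \<in> U" "eM i = eM j" using m.lab_iff[of "eM i" j] j eMA[OF that] by (auto simp: U_def eM_def)
    then have "eN i = eN j" using sameMN that by blast
    then show ?thesis unfolding f_def j_def[symmetric] by simp
  qed
  show ?thesis unfolding T_iso_def
  proof (simp, intro exI[of _ f] conjI allI impI ballI)
    show "bij_betw f A B"
    proof (rule bij_betw_imageI)
      show "inj_on f A"
      proof (rule inj_onI)
        fix x y assume "x \<in> A" "y \<in> A" "f x = f y"
        then obtain i j where "i \<in> U" "j \<in> U" "x = eM i" "y = eM j" "eN i = eN j"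
          using reprM f_elt by metis
        then show "x = y" using sameMN by blast
      qed
      show "f ` A = B"
      proof
        show "f ` A \<subseteq> B" using reprM f_elt eNB by fastforce
        show "B \<subseteq> f ` A"
        proof
          fix y assume "y \<in> B"
          then obtain i where "i \<in> U" "y = eN i" using reprN by blast
          then show "y \<in> f ` A" using f_elt eMA by (metis image_eqI)
        qed
      qed
    qed
  next
    fix x y assume "x \<in> A" "y \<in> A"
    then obtain i j where ij: "i \<in> U" "j \<in> U" "x = eM i" "y = eM j" using reprM by metis
    have "lt (eM i) (eM j) \<longleftrightarrow> lt' (eN i) (eN j)"
      using m.lt_iff[of i j] n.lt_iff[of i j] ij U2 Rl2 by (simp add: U_def Rl_def eM_def eN_def)
    then show "lt x y \<longleftrightarrow> lt' (f x) (f y)" using ij f_elt by simp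
  next
    fix l x assume l: "l < k" and "x \<in> A"
    then obtain i where i: "i \<in> U" "x = eM i" using reprM by metis
    have "R l (eM i) \<longleftrightarrow> l \<in> U \<and> eM i = eM l \<and> (l,l) \<notin> Rl"
      using m.R_iff[OF eMA[OF i(1)] l] by (simp add: U_def Rl_def eM_def)
    also have "\<dots> \<longleftrightarrow> l \<in> U \<and> eN i = eN l \<and> (l,l) \<notin> Rl" using sameMN i(1) by blast
    also have "\<dots> \<longleftrightarrow> R' l (eN i)"
      using n.R_iff[OF eNB[OF i(1)] l] U2 Rl2 by (simp add: eN_def)
    finally show "R l x \<longleftrightarrow> R' l (f x)" using i f_elt by simp
    have "S l (eM i) \<longleftrightarrow> l \<in> U \<and> eM i = eM l \<and> (l,l) \<in> Rl"
      using m.S_iff[OF eMA[OF i(1)] l] by (simp add: U_def Rl_def eM_def)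
    also have "\<dots> \<longleftrightarrow> l \<in> U \<and> eN i = eN l \<and> (l,l) \<in> Rl" using sameMN i(1) by blast
    also have "\<dots> \<longleftrightarrow> S' l (eN i)"
      using n.S_iff[OF eNB[OF i(1)] l] U2 Rl2 by (simp add: eN_def)
    finally show "S l x \<longleftrightarrow> S' l (f x)" using i f_elt by simp
  qed
qed


lemma model_exists:
  assumes v: "(U, Rl) \<in> IS k"
  shows "\<exists>M. is_model_T k M \<and> inv_m k M = (U, Rl)"
proof -
  have Uk: "U \<subseteq> {..<k}" and Rsub: "Rl \<subseteq> U \<times> U" and tr: "trans Rl"
    and tot: "\<And>i j. i \<in> U \<Longrightarrow> j \<in> U \<Longrightarrow> i \<noteq> j \<Longrightarrow> (i,j) \<in> Rl \<or> (j,i) \<in> Rl"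
    using v unfolding IS_def Rels_def by auto
  have trD: "(a,b) \<in> Rl \<Longrightarrow> (b,c) \<in> Rl \<Longrightarrow> (a,c) \<in> Rl" for a b c using tr by (rule transD)
  define E where "E = (\<lambda>i j. i = j \<or> ((i,j) \<in> Rl \<and> (j,i) \<in> Rl))"
  have Esym: "E i j \<Longrightarrow> E j i" for i j unfolding E_def by blast
  have Etrans: "E i j \<Longrightarrow> E j l \<Longrightarrow> E i l" for i j l unfolding E_def using trD by blast
  have Erel: "E a a' \<Longrightarrow> E b b' \<Longrightarrow> (a,b) \<in> Rl \<Longrightarrow> (a',b') \<in> Rl" for a a' b b'
    unfolding E_def using trD by metis
  have Erefl: "E i j \<Longrightarrow> (i,i) \<in> Rl \<Longrightarrow> (j,j) \<in> Rl" for i j unfolding E_def using trD by blast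
  define rep where "rep = (\<lambda>i. LEAST j. j \<in> U \<and> E i j)"
  have rep: "i \<in> U \<Longrightarrow> rep i \<in> U \<and> E i (rep i)" for i
    unfolding rep_def by (rule LeastI[of _ i]) (simp add: E_def)
  have rep_eq: "i \<in> U \<Longrightarrow> j \<in> U \<Longrightarrow> E i j \<Longrightarrow> rep i = rep j" for i j
  proof -
    assume a: "i \<in> U" "j \<in> U" "E i j"
    have "(\<lambda>l. l \<in> U \<and> E i l) = (\<lambda>l. l \<in> U \<and> E j l)" using a Esym Etrans by blast
    then show "rep i = rep j" unfolding rep_def by simp
  qed
  have rep_rep: "i \<in> U \<Longrightarrow> rep (rep i) = rep i" for i
    using rep rep_eq Esym by metis
  have rep_E: "i \<in> U \<Longrightarrow> j \<in> U \<Longrightarrow> rep i = rep j \<longleftrightarrow> E i j" for i j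
    using rep rep_eq Esym Etrans by metis
  have rep_single: "rep i = i" if a: "i \<in> U" "(i,i) \<notin> Rl" for i
  proof -
    from rep[OF a(1)] have "rep i = i \<or> ((i, rep i) \<in> Rl \<and> (rep i, i) \<in> Rl)" unfolding E_def by auto
    then show ?thesis using trD[of i "rep i" i] a(2) by blast
  qed
  define A where "A = rep ` U"
  define lt where "lt = (\<lambda>x y. (x,y) \<in> Rl \<and> (y,x) \<notin> Rl)"
  define Rm where "Rm = (\<lambda>i x. i \<in> U \<and> x = i \<and> (i,i) \<notin> Rl)"
  define Sm where "Sm = (\<lambda>i x. i \<in> U \<and> (i,i) \<in> Rl \<and> x = rep i)"
  have AU: "A \<subseteq> U" unfolding A_def using rep by blast
  have Arep: "x \<in> A \<Longrightarrow> rep x = x" for x unfolding A_def using rep_rep by blast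
  have lab: "x \<in> A \<Longrightarrow> labm Rm Sm i x \<longleftrightarrow> i \<in> U \<and> x = rep i" for x i
    unfolding labm_def Rm_def Sm_def using rep_single by metis
  have model: "is_model_T k (A, lt, Rm, Sm)"
    unfolding is_model_T_def
  proof (simp only: prod.case, intro conjI)
    show "strict_linear_on A lt"
      unfolding strict_linear_on_def
    proof (intro conjI ballI impI)
      fix x assume "x \<in> A" then show "\<not> lt x x" unfolding lt_def by blast
    next
      fix x y z assume "x \<in> A" "y \<in> A" "z \<in> A" "lt x y \<and> lt y z"
      then show "lt x z" unfolding lt_def using trD by blast
    next
      fix x y assume xy: "x \<in> A" "y \<in> A" "x \<noteq> y"
      then have "\<not> E x y" using rep_E[of x y] Arep AU by auto
      then show "lt x y \<or> lt y x" unfolding lt_def E_def using tot xy AU by blast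
    qed
    show "\<forall>x\<in>A. (\<exists>i<k. Rm i x) \<or> (\<exists>i<k. Sm i x)"
    proof
      fix x assume x: "x \<in> A"
      then have xU: "x \<in> U" "x < k" using AU Uk by auto
      show "(\<exists>i<k. Rm i x) \<or> (\<exists>i<k. Sm i x)"
      proof (cases "(x,x) \<in> Rl")
        case True then have "Sm x x" using Arep x xU by (simp add: Sm_def)
        then show ?thesis using xU by blast
      next
        case False then have "Rm x x" using xU by (simp add: Rm_def)
        then show ?thesis using xU by blast
      qed
    qed
    show "\<forall>x\<in>A. \<forall>i<k. \<forall>j<k. Rm i x \<and> Rm j x \<longrightarrow> i = j" unfolding Rm_def by blast
    show "\<forall>x\<in>A. \<forall>i<k. \<forall>j<k. \<not> (Rm i x \<and> Sm j x)"
    proof (intro ballI allI impI notI)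
      fix x i j assume h: "x \<in> A" "i < k" "j < k" "Rm i x \<and> Sm j x"
      then have "E j i" "(j,j) \<in> Rl" "(i,i) \<notin> Rl" using rep unfolding Rm_def Sm_def by auto
      then show False using Erefl by blast
    qed
    show "\<forall>i<k. \<forall>x\<in>A. \<forall>y\<in>A. Rm i x \<and> Rm i y \<longrightarrow> x = y" unfolding Rm_def by blast
    show "\<forall>i<k. \<forall>x\<in>A. \<forall>y\<in>A. Sm i x \<and> Sm i y \<longrightarrow> x = y" unfolding Sm_def by blast
    show "\<forall>i<k. \<not> ((\<exists>x\<in>A. Rm i x) \<and> (\<exists>x\<in>A. Sm i x))" unfolding Rm_def Sm_def by blast
  qed
  have Um_eq: "Um k A Rm Sm = U"
  proof
    show "Um k A Rm Sm \<subseteq> U" unfolding Um_def using lab by blast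
    show "U \<subseteq> Um k A Rm Sm"
    proof
      fix i assume i: "i \<in> U"
      then have "rep i \<in> A" "i < k" using Uk unfolding A_def by auto
      then show "i \<in> Um k A Rm Sm" unfolding Um_def using lab i by blast
    qed
  qed
  have Sel: "x \<in> A \<Longrightarrow> (\<exists>l<k. Sm l x) \<longleftrightarrow> (x,x) \<in> Rl" for x
  proof
    assume x: "x \<in> A" "\<exists>l<k. Sm l x"
    then obtain l where "l \<in> U" "(l,l) \<in> Rl" "x = rep l" unfolding Sm_def by blast
    then show "(x,x) \<in> Rl" using rep Erefl by blast
  next
    assume x: "x \<in> A" "(x,x) \<in> Rl"
    then have "Sm x x" "x < k" using Arep AU Uk unfolding Sm_def by auto
    then show "\<exists>l<k. Sm l x" by blast
  qed
  have Relm_eq: "Relm k A lt Rm Sm = Rl"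
  proof (rule set_eqI, clarify)
    fix i j
    show "(i,j) \<in> Relm k A lt Rm Sm \<longleftrightarrow> (i,j) \<in> Rl"
    proof
      assume "(i,j) \<in> Relm k A lt Rm Sm"
      then obtain x y where h: "i < k" "j < k" "x \<in> A" "y \<in> A" "labm Rm Sm i x" "labm Rm Sm j y"
        "lt x y \<or> (x = y \<and> (\<exists>l<k. Sm l x))" unfolding Relm_def by blast
      then have ij: "i \<in> U" "j \<in> U" "x = rep i" "y = rep j" using lab by blast+
      have Ei: "E i (rep i)" "E j (rep j)" using rep ij by blast+
      show "(i,j) \<in> Rl"
      proof (cases "x = y")
        case True
        then have "(x,x) \<in> Rl" using h Sel lt_def by blast
        moreover have "E x i" "E x j" using True ij Ei Esym by auto
        ultimately show ?thesis using Erel by blast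
      next
        case False
        then have "(x,y) \<in> Rl" using h lt_def by blast
        then show ?thesis using Erel Ei Esym ij by metis
      qed
    next
      assume ij: "(i,j) \<in> Rl"
      then have u: "i \<in> U" "j \<in> U" using Rsub by auto
      then have ik: "i < k" "j < k" using Uk by auto
      have xA: "rep i \<in> A" "rep j \<in> A" using u unfolding A_def by auto
      have l: "labm Rm Sm i (rep i)" "labm Rm Sm j (rep j)" using lab xA u by auto
      have Ei: "E i (rep i)" "E j (rep j)" using rep u by blast+
      have "(rep i, rep j) \<in> Rl" using Erel Ei ij by blast
      have "lt (rep i) (rep j) \<or> (rep i = rep j \<and> (\<exists>l<k. Sm l (rep i)))"
      proof (cases "rep i = rep j")
        case True
        then show ?thesis using Sel[OF xA(1)] \<open>(rep i, rep j) \<in> Rl\<close> by simp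
      next
        case False
        then have "\<not> E i j" using rep_E u by blast
        then have "(j,i) \<notin> Rl" using ij unfolding E_def by blast
        then have "(rep j, rep i) \<notin> Rl" using Erel Ei Esym by blast
        then show ?thesis using \<open>(rep i, rep j) \<in> Rl\<close> lt_def by blast
      qed
      then show "(i,j) \<in> Relm k A lt Rm Sm" unfolding Relm_def using ik xA l by blast
    qed
  qed
  show ?thesis using model Um_eq Relm_eq by (intro exI[of _ "(A, lt, Rm, Sm)"]) (simp add: inv_m_def)
qed

lemma num_models_T_eq: "num_models_T k = card (IS k)"
proof -
  have "num_models_T k = card (inv_m k ` {M. is_model_T k M})"
    unfolding num_models_T_def
  proof (rule card_iso_types_inv)
    fix M N assume "is_model_T k M" "is_model_T k N"
    then show "T_iso k M N \<longleftrightarrow> inv_m k M = inv_m k N"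
      using T_iso_inv inv_T_iso by (cases M, cases N) blast
  qed
  also have "inv_m k ` {M. is_model_T k M} = IS k"
  proof
    show "inv_m k ` {M. is_model_T k M} \<subseteq> IS k"
    proof
      fix v assume "v \<in> inv_m k ` {M. is_model_T k M}"
      then obtain M where M: "is_model_T k M" "v = inv_m k M" by blast
      obtain A lt R S where "M = (A, lt, R, S)" by (cases M) auto
      then show "v \<in> IS k" using M tmodel.inv_IS[of k A lt R S] tmodel.intro
        by (simp add: inv_m_def)
    qed
    show "IS k \<subseteq> inv_m k ` {M. is_model_T k M}"
    proof
      fix v assume v: "v \<in> IS k"
      obtain U Rl where "v = (U, Rl)" by (cases v)
      then obtain M where "is_model_T k M" "inv_m k M = v" using model_exists v by blast
      then show "v \<in> inv_m k ` {M. is_model_T k M}" by blast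
    qed
  qed
  finally show ?thesis .
qed


definition piso :: "(nat \<Rightarrow> nat \<Rightarrow> bool) \<Rightarrow> (nat \<Rightarrow> nat) \<Rightarrow> (nat \<Rightarrow> nat \<Rightarrow> bool) \<Rightarrow> (nat \<Rightarrow> nat) \<Rightarrow> (nat \<times> nat) set \<Rightarrow> bool" where
  "piso lt c lt' c' G \<longleftrightarrow> (\<forall>p\<in>G. \<forall>q\<in>G. (fst p = fst q \<longleftrightarrow> snd p = snd q) \<and> (lt (fst p) (fst q) \<longleftrightarrow> lt' (snd p) (snd q)))
      \<and> (\<forall>p\<in>G. c (fst p) = c' (snd p))"

definition extp :: "nat set \<Rightarrow> (nat \<Rightarrow> nat \<Rightarrow> bool) \<Rightarrow> (nat \<Rightarrow> nat) \<Rightarrow> nat set \<Rightarrow> (nat \<Rightarrow> nat \<Rightarrow> bool) \<Rightarrow> (nat \<Rightarrow> nat) \<Rightarrow> bool" where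
  "extp A lt c B lt' c' \<longleftrightarrow> (\<forall>G. finite G \<and> G \<subseteq> A \<times> B \<and> piso lt c lt' c' G \<longrightarrow> (\<forall>a\<in>A. \<exists>b\<in>B. piso lt c lt' c' (insert (a,b) G)))"

lemma piso_converse:
  assumes "piso lt c lt' c' G" shows "piso lt' c' lt c (converse G)"
  unfolding piso_def
proof (intro conjI ballI)
  fix p q assume "p \<in> converse G" "q \<in> converse G"
  then have pq: "(snd p, fst p) \<in> G" "(snd q, fst q) \<in> G" by auto
  show "fst p = fst q \<longleftrightarrow> snd p = snd q"
    using assms pq unfolding piso_def by (metis fst_conv snd_conv)
  show "lt' (fst p) (fst q) \<longleftrightarrow> lt (snd p) (snd q)"
    using assms pq unfolding piso_def by (metis fst_conv snd_conv)
next
  fix p assume "p \<in> converse G"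
  then have pq: "(snd p, fst p) \<in> G" by auto
  show "c' (fst p) = c (snd p)" using assms pq unfolding piso_def by (metis fst_conv snd_conv)
qed

lemma piso_mono: "piso lt c lt' c' G \<Longrightarrow> H \<subseteq> G \<Longrightarrow> piso lt c lt' c' H"
  unfolding piso_def by blast

theorem back_forth:
  assumes fw: "extp A lt c B lt' c'" and bw: "extp B lt' c' A lt c"
    and G0: "finite G0" "G0 \<subseteq> A \<times> B" "piso lt c lt' c' G0"
  shows "\<exists>f. clo_iso_on lt c A lt' c' B f \<and> (\<forall>p\<in>G0. f (fst p) = snd p)"
proof -
  define good where "good = (\<lambda>G. finite G \<and> G \<subseteq> A \<times> B \<and> piso lt c lt' c' G)"
  define F where "F = (\<lambda>G n. if n \<in> A then insert (n, SOME b. b \<in> B \<and> piso lt c lt' c' (insert (n,b) G)) G else G)"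
  define Bk where "Bk = (\<lambda>G n. if n \<in> B then insert (SOME a. a \<in> A \<and> piso lt c lt' c' (insert (a,n) G), n) G else G)"
  have F: "good (F G n) \<and> G \<subseteq> F G n \<and> (n \<in> A \<longrightarrow> (\<exists>b. (n,b) \<in> F G n))" if g: "good G" for G n
  proof (cases "n \<in> A")
    case True
    have "\<exists>b. b \<in> B \<and> piso lt c lt' c' (insert (n,b) G)"
      using fw g True unfolding extp_def good_def by blast
    then obtain b where b: "b \<in> B" "piso lt c lt' c' (insert (n,b) G)" "F G n = insert (n,b) G"
      using someI_ex True unfolding F_def by (metis (mono_tags, lifting))
    show ?thesis unfolding b(3) using g b(1,2) True unfolding good_def by blast
  next
    case False then show ?thesis using g unfolding F_def by auto
  qed
  have Bk: "good (Bk G n) \<and> G \<subseteq> Bk G n \<and> (n \<in> B \<longrightarrow> (\<exists>a. (a,n) \<in> Bk G n))" if g: "good G" for G n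
  proof (cases "n \<in> B")
    case True
    have gc: "finite (converse G)" "converse G \<subseteq> B \<times> A" "piso lt' c' lt c (converse G)"
      using g unfolding good_def by (simp, blast, simp add: piso_converse)
    then have "finite (converse G) \<and> converse G \<subseteq> B \<times> A \<and> piso lt' c' lt c (converse G)" by blast
    from bw[unfolded extp_def, THEN spec[of _ "converse G"], THEN mp, OF this]
    obtain a where a: "a \<in> A" "piso lt' c' lt c (insert (n,a) (converse G))"
      using True by blast
    have "converse (insert (n,a) (converse G)) = insert (a,n) G" by auto
    then have "piso lt c lt' c' (insert (a,n) G)" using piso_converse[OF a(2)] by simp
    then have "\<exists>a. a \<in> A \<and> piso lt c lt' c' (insert (a,n) G)" using a(1) by blast
    then obtain a where a: "a \<in> A" "piso lt c lt' c' (insert (a,n) G)" "Bk G n = insert (a,n) G"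
      using someI_ex True unfolding Bk_def by (metis (mono_tags, lifting))
    show ?thesis unfolding a(3) using g a(1,2) True unfolding good_def by blast
  next
    case False then show ?thesis using g unfolding Bk_def by auto
  qed
  define seq where "seq = rec_nat G0 (\<lambda>n G. Bk (F G n) n)"
  have seq0: "seq 0 = G0" and seqS: "seq (Suc n) = Bk (F (seq n) n) n" for n
    unfolding seq_def by simp_all
  have gs: "good (seq n)" for n
  proof (induction n)
    case 0 then show ?case using G0 by (simp add: seq0 good_def)
  next
    case (Suc n) then show ?case using F Bk by (simp add: seqS)
  qed
  have Fg: "good (F (seq n) n)" for n using F[OF gs[of n], of n] by blast
  have incS: "seq n \<subseteq> seq (Suc n)" for n
    using F[OF gs[of n], of n] Bk[OF Fg[of n], of n] unfolding seqS by blast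
  have mono: "m \<le> n \<Longrightarrow> seq m \<subseteq> seq n" for m n
    by (rule lift_Suc_mono_le[of seq, OF incS])
  define Gi where "Gi = (\<Union>n. seq n)"
  have Gi_sub: "Gi \<subseteq> A \<times> B" using gs unfolding Gi_def good_def by blast
  have two: "\<exists>n. p \<in> seq n \<and> q \<in> seq n" if pq: "p \<in> Gi" "q \<in> Gi" for p q
  proof -
    obtain m1 m2 where "p \<in> seq m1" "q \<in> seq m2" using pq unfolding Gi_def by blast
    then show ?thesis using mono[of m1 "max m1 m2"] mono[of m2 "max m1 m2"] by auto
  qed
  have pGi: "(fst p = fst q \<longleftrightarrow> snd p = snd q) \<and> (lt (fst p) (fst q) \<longleftrightarrow> lt' (snd p) (snd q)) \<and> c (fst p) = c' (snd p)"
    if "p \<in> Gi" "q \<in> Gi" for p q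
    using two[OF that] gs unfolding good_def piso_def by blast
  have dom: "\<exists>b. (a,b) \<in> Gi" if aA: "a \<in> A" for a
  proof -
    obtain b where "(a,b) \<in> F (seq a) a" using F[OF gs[of a], of a] aA by blast
    then have "(a,b) \<in> seq (Suc a)" using Bk[OF Fg[of a], of a] unfolding seqS by blast
    then show ?thesis unfolding Gi_def by blast
  qed
  have ran: "\<exists>a. (a,b) \<in> Gi" if bB: "b \<in> B" for b
  proof -
    obtain a where "(a,b) \<in> seq (Suc b)" using Bk[OF Fg[of b], of b] bB unfolding seqS by blast
    then show ?thesis unfolding Gi_def by blast
  qed
  define f where "f = (\<lambda>x. SOME y. (x,y) \<in> Gi)"
  have fG: "(x,y) \<in> Gi \<Longrightarrow> f x = y" for x y
  proof -
    assume xy: "(x,y) \<in> Gi"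
    then have "(x, f x) \<in> Gi" unfolding f_def by (rule someI)
    then show "f x = y" using pGi[OF xy, of "(x, f x)"] by simp
  qed
  have fA: "x \<in> A \<Longrightarrow> (x, f x) \<in> Gi" for x using dom fG by blast
  show ?thesis
  proof (intro exI[of _ f] conjI ballI)
    show "clo_iso_on lt c A lt' c' B f"
      unfolding clo_iso_on_def
    proof (intro conjI ballI)
      show "bij_betw f A B"
      proof (rule bij_betw_imageI)
        show "inj_on f A"
        proof (rule inj_onI)
          fix x x' assume "x \<in> A" "x' \<in> A" "f x = f x'"
          then show "x = x'" using pGi[OF fA fA, of x x'] by simp
        qed
        show "f ` A = B"
        proof
          show "f ` A \<subseteq> B" using fA Gi_sub by blast
          show "B \<subseteq> f ` A"
          proof
            fix y assume "y \<in> B"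
            then obtain x where "(x,y) \<in> Gi" using ran by blast
            then have "x \<in> A" "f x = y" using Gi_sub fG by auto
            then show "y \<in> f ` A" by blast
          qed
        qed
      qed
      fix x y assume "x \<in> A" "y \<in> A"
      then show "lt x y \<longleftrightarrow> lt' (f x) (f y)" using pGi[OF fA fA, of x y] by simp
    next
      fix x assume "x \<in> A"
      then show "c' (f x) = c x" using pGi[OF fA fA, of x x] by simp
    qed
    fix p assume "p \<in> G0"
    then have "p \<in> Gi" using seq0 unfolding Gi_def by blast
    then show "f (fst p) = snd p" using fG[of "fst p" "snd p"] by simp
  qed
qed


definition inv_h :: "clo \<Rightarrow> nat set \<times> (nat \<times> nat) set" where
  "inv_h S = (case S of (A, lt, c) \<Rightarrow> (c ` A, {(c x, c y) | x y. x \<in> A \<and> y \<in> A \<and> lt x y}))"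

lemma fin_max:
  assumes "finite Lo" "Lo \<noteq> {}"
    and tot: "\<forall>x\<in>Lo. \<forall>y\<in>Lo. x \<noteq> y \<longrightarrow> r x y \<or> r y x"
    and tr: "\<forall>x\<in>Lo. \<forall>y\<in>Lo. \<forall>z\<in>Lo. r x y \<longrightarrow> r y z \<longrightarrow> r x z"
  shows "\<exists>m\<in>Lo. \<forall>x\<in>Lo. x \<noteq> m \<longrightarrow> r x m"
  using assms(1,2) tot tr
proof (induction Lo rule: finite_ne_induct)
  case (singleton x) then show ?case by blast
next
  case (insert a V)
  then obtain m where m: "m \<in> V" "\<forall>x\<in>V. x \<noteq> m \<longrightarrow> r x m" by blast
  show ?case
  proof (cases "r m a")
    case True
    have "\<forall>x\<in>insert a V. x \<noteq> a \<longrightarrow> r x a"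
    proof (intro ballI impI)
      fix x assume x: "x \<in> insert a V" "x \<noteq> a"
      then have "x \<in> V" by auto
      show "r x a"
      proof (cases "x = m")
        case True then show ?thesis using \<open>r m a\<close> by simp
      next
        case False
        then have "r x m" using m \<open>x \<in> V\<close> by blast
        then show ?thesis using insert.prems(2) \<open>r m a\<close> \<open>x \<in> V\<close> m(1) by blast
      qed
    qed
    then show ?thesis by blast
  next
    case False
    have "a \<noteq> m" using insert.hyps m(1) by auto
    then have "r a m" using insert.prems(1) False m(1) by blast
    then have "\<forall>x\<in>insert a V. x \<noteq> m \<longrightarrow> r x m" using m by blast
    then show ?thesis using m(1) by blast
  qed
qed

lemma piso_insert:
  assumes "piso lt c lt' c' G"
    and "\<forall>q\<in>G. fst q \<noteq> a \<and> snd q \<noteq> b \<and> (lt (fst q) a \<longleftrightarrow> lt' (snd q) b) \<and> (lt a (fst q) \<longleftrightarrow> lt' b (snd q))"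
    and "lt a a \<longleftrightarrow> lt' b b" "c a = c' b"
  shows "piso lt c lt' c' (insert (a,b) G)"
  using assms unfolding piso_def by auto

locale hstr =
  fixes k :: nat and A :: "nat set" and lt :: "nat \<Rightarrow> nat \<Rightarrow> bool" and c :: "nat \<Rightarrow> nat"
  assumes H: "is_hclo k (A, lt, c)"
begin

lemma lin: "strict_linear_on A lt" using H by (simp add: is_hclo_def is_clo_def)
lemma col: "x \<in> A \<Longrightarrow> c x < k" using H by (simp add: is_hclo_def is_clo_def)
lemma irr: "x \<in> A \<Longrightarrow> \<not> lt x x" using lin unfolding strict_linear_on_def by blast
lemma trn: "x \<in> A \<Longrightarrow> y \<in> A \<Longrightarrow> z \<in> A \<Longrightarrow> lt x y \<Longrightarrow> lt y z \<Longrightarrow> lt x z"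
  using lin unfolding strict_linear_on_def by blast
lemma tot: "x \<in> A \<Longrightarrow> y \<in> A \<Longrightarrow> x \<noteq> y \<Longrightarrow> lt x y \<or> lt y x"
  using lin unfolding strict_linear_on_def by blast
lemma asym: "x \<in> A \<Longrightarrow> y \<in> A \<Longrightarrow> lt x y \<Longrightarrow> \<not> lt y x"
  using irr trn by blast

lemma hom: "finite X \<Longrightarrow> X \<subseteq> A \<Longrightarrow> Y \<subseteq> A \<Longrightarrow> clo_iso_on lt c X lt c Y p \<Longrightarrow>
    \<exists>g. clo_iso_on lt c A lt c A g \<and> (\<forall>x\<in>X. g x = p x)"
  using H unfolding is_hclo_def clo_homogeneous_def by blast

lemma autD:
  assumes "clo_iso_on lt c A lt c A g"
  shows "x \<in> A \<Longrightarrow> g x \<in> A" "x \<in> A \<Longrightarrow> y \<in> A \<Longrightarrow> lt x y \<longleftrightarrow> lt (g x) (g y)" "x \<in> A \<Longrightarrow> c (g x) = c x"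
  using assms unfolding clo_iso_on_def bij_betw_def by auto

lemma auto1:
  assumes "u \<in> A" "u' \<in> A" "c u = c u'"
  shows "\<exists>g. clo_iso_on lt c A lt c A g \<and> g u = u'"
proof -
  have "clo_iso_on lt c {u} lt c {u'} (\<lambda>_. u')"
    unfolding clo_iso_on_def using assms irr by (auto simp: bij_betw_def)
  from hom[OF _ _ _ this] assms show ?thesis by auto
qed

lemma auto2:
  assumes "u \<in> A" "w \<in> A" "u' \<in> A" "w' \<in> A" "lt u w" "lt u' w'" "c u = c u'" "c w = c w'"
  shows "\<exists>g. clo_iso_on lt c A lt c A g \<and> g u = u' \<and> g w = w'"
proof -
  define p where "p = (\<lambda>x. if x = u then u' else w')"
  have uw: "u \<noteq> w" "u' \<noteq> w'" using assms irr by auto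
  have "clo_iso_on lt c {u, w} lt c {u', w'} p"
    unfolding clo_iso_on_def
  proof (intro conjI ballI)
    show "bij_betw p {u, w} {u', w'}" using uw by (auto simp: bij_betw_def p_def inj_on_def)
    fix x y assume "x \<in> {u, w}" "y \<in> {u, w}"
    have f1: "\<not> lt w u" "\<not> lt w' u'" "\<not> lt u u" "\<not> lt w w" "\<not> lt u' u'" "\<not> lt w' w'"
      using asym irr assms by blast+
    show "lt x y \<longleftrightarrow> lt (p x) (p y)"
      using \<open>x \<in> {u, w}\<close> \<open>y \<in> {u, w}\<close> uw assms(5,6) f1 by (cases "x = u"; cases "y = u") (auto simp: p_def)
  next
    fix x assume "x \<in> {u, w}"
    then show "c (p x) = c x" using assms uw by (auto simp: p_def)
  qed
  from hom[OF _ _ _ this] assms uw show ?thesis by (auto simp: p_def)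
qed

definition "Rh = {(c x, c y) | x y. x \<in> A \<and> y \<in> A \<and> lt x y}"

lemma inv_h_eq: "inv_h (A, lt, c) = (c ` A, Rh)" by (simp add: inv_h_def Rh_def)

lemma Rh_pair:
  assumes "(i,j) \<in> Rh" "x \<in> A" "c x = i"
  shows "\<exists>y\<in>A. lt x y \<and> c y = j"
proof -
  obtain x0 y0 where h: "x0 \<in> A" "y0 \<in> A" "lt x0 y0" "c x0 = i" "c y0 = j" using assms(1) unfolding Rh_def by blast
  obtain g where g: "clo_iso_on lt c A lt c A g" "g x0 = x" using auto1[OF h(1) assms(2)] h(4) assms(3) by auto
  show ?thesis using autD[OF g(1)] g(2) h by (intro bexI[of _ "g y0"]) auto
qed

lemma Rh_pair':
  assumes "(i,j) \<in> Rh" "y \<in> A" "c y = j"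
  shows "\<exists>x\<in>A. lt x y \<and> c x = i"
proof -
  obtain x0 y0 where h: "x0 \<in> A" "y0 \<in> A" "lt x0 y0" "c x0 = i" "c y0 = j" using assms(1) unfolding Rh_def by blast
  obtain g where g: "clo_iso_on lt c A lt c A g" "g y0 = y" using auto1[OF h(2) assms(2)] h(5) assms(3) by auto
  show ?thesis using autD[OF g(1)] g(2) h by (intro bexI[of _ "g x0"]) auto
qed

lemma triple:
  assumes "(a,b) \<in> Rh" "(b,d) \<in> Rh"
  shows "\<exists>u\<in>A. \<exists>v\<in>A. \<exists>w\<in>A. lt u v \<and> lt v w \<and> c u = a \<and> c v = b \<and> c w = d"
proof -
  obtain u v where h: "u \<in> A" "v \<in> A" "lt u v" "c u = a" "c v = b" using assms(1) unfolding Rh_def by blast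
  obtain w where "w \<in> A" "lt v w" "c w = d" using Rh_pair[OF assms(2) h(2,5)] by blast
  then show ?thesis using h by blast
qed

lemma inv_IS: "inv_h (A, lt, c) \<in> IS k"
  unfolding inv_h_eq IS_def Rels_def
proof (intro CollectI case_prodI conjI)
  show "c ` A \<subseteq> {..<k}" using col by auto
  show "Rh \<subseteq> c ` A \<times> c ` A" unfolding Rh_def by blast
  show "trans Rh"
  proof (rule transI)
    fix a b d assume "(a,b) \<in> Rh" "(b,d) \<in> Rh"
    then obtain u v w where "u \<in> A" "v \<in> A" "w \<in> A" "lt u v" "lt v w" "c u = a" "c w = d"
      using triple by blast
    then show "(a,d) \<in> Rh" unfolding Rh_def using trn by blast
  qed
  show "\<forall>i\<in>c ` A. \<forall>j\<in>c ` A. i \<noteq> j \<longrightarrow> (i,j) \<in> Rh \<or> (j,i) \<in> Rh"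
  proof (intro ballI impI)
    fix i j assume "i \<in> c ` A" "j \<in> c ` A" "i \<noteq> j"
    then obtain x y where "x \<in> A" "y \<in> A" "c x = i" "c y = j" "x \<noteq> y" by auto
    then show "(i,j) \<in> Rh \<or> (j,i) \<in> Rh" using tot unfolding Rh_def by blast
  qed
qed

end

lemma hstr_ext:
  assumes S: "hstr k A lt c" and T: "hstr k B lt' c'" and eq: "inv_h (A, lt, c) = inv_h (B, lt', c')"
  shows "extp A lt c B lt' c'"
  unfolding extp_def
proof (intro allI impI ballI)
  interpret s: hstr k A lt c by (rule S)
  interpret t: hstr k B lt' c' by (rule T)
  have U: "c ` A = c' ` B" and R: "s.Rh = t.Rh" using eq by (simp_all add: s.inv_h_eq t.inv_h_eq)
  fix G a assume G: "finite G \<and> G \<subseteq> A \<times> B \<and> piso lt c lt' c' G" and a: "a \<in> A"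
  have GAB: "G \<subseteq> A \<times> B" and pG: "piso lt c lt' c' G" and fG: "finite G" using G by auto
  have pf: "(fst p = fst q \<longleftrightarrow> snd p = snd q) \<and> (lt (fst p) (fst q) \<longleftrightarrow> lt' (snd p) (snd q)) \<and> c (fst p) = c' (snd p)"
    if "p \<in> G" "q \<in> G" for p q using pG that unfolding piso_def by blast
  show "\<exists>b\<in>B. piso lt c lt' c' (insert (a, b) G)"
  proof (cases "\<exists>b. (a,b) \<in> G")
    case True
    then obtain b where "(a,b) \<in> G" by blast
    then show ?thesis using GAB pG by (intro bexI[of _ b]) (auto simp: insert_absorb)
  next
    case False
    then have na: "\<forall>q\<in>G. fst q \<noteq> a" by auto
    define Lo where "Lo = {q\<in>G. lt (fst q) a}"
    define Hs where "Hs = {q\<in>G. lt a (fst q)}"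
    have LH: "q \<in> Lo \<or> q \<in> Hs" if "q \<in> G" for q
      using s.tot[of "fst q" a] na that GAB a unfolding Lo_def Hs_def by force
    have qA: "q \<in> G \<Longrightarrow> fst q \<in> A \<and> snd q \<in> B" for q using GAB by auto
    have suff: "piso lt c lt' c' (insert (a,b) G)"
      if b: "b \<in> B" "c' b = c a" "\<forall>q\<in>Lo. lt' (snd q) b" "\<forall>q\<in>Hs. lt' b (snd q)" for b
    proof (rule piso_insert[OF pG])
      show "\<forall>q\<in>G. fst q \<noteq> a \<and> snd q \<noteq> b \<and> (lt (fst q) a \<longleftrightarrow> lt' (snd q) b) \<and> (lt a (fst q) \<longleftrightarrow> lt' b (snd q))"
      proof
        fix q assume q: "q \<in> G"
        show "fst q \<noteq> a \<and> snd q \<noteq> b \<and> (lt (fst q) a \<longleftrightarrow> lt' (snd q) b) \<and> (lt a (fst q) \<longleftrightarrow> lt' b (snd q))"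
        proof (cases "q \<in> Lo")
          case True
          then have "lt (fst q) a" "lt' (snd q) b" using b(3) unfolding Lo_def by blast+
          moreover have "\<not> lt a (fst q)" "\<not> lt' b (snd q)"
            using s.asym t.asym qA[OF q] a b(1) calculation by blast+
          ultimately show ?thesis using na q t.irr b(1) by auto
        next
          case False
          then have "q \<in> Hs" using LH q by blast
          then have "lt a (fst q)" "lt' b (snd q)" using b(4) unfolding Hs_def by blast+
          moreover have "\<not> lt (fst q) a" "\<not> lt' (snd q) b"
            using s.asym t.asym qA[OF q] a b(1) calculation by blast+
          ultimately show ?thesis using na q t.irr b(1) by auto
        qed
      qed
      show "lt a a \<longleftrightarrow> lt' b b" using s.irr t.irr a b(1) by blast
      show "c a = c' b" using b(2) by simp
    qed
    have Lmax: "\<exists>m\<in>Lo. \<forall>q\<in>Lo. q \<noteq> m \<longrightarrow> lt (fst q) (fst m)" if "Lo \<noteq> {}"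
    proof (rule fin_max)
      show "finite Lo" using fG unfolding Lo_def by simp
      show "Lo \<noteq> {}" by (fact that)
      show "\<forall>x\<in>Lo. \<forall>y\<in>Lo. x \<noteq> y \<longrightarrow> lt (fst x) (fst y) \<or> lt (fst y) (fst x)"
      proof (intro ballI impI)
        fix x y assume xy: "x \<in> Lo" "y \<in> Lo" "x \<noteq> y"
        then have "fst x \<noteq> fst y" using pf[of x y] unfolding Lo_def by (auto simp: prod_eq_iff)
        then show "lt (fst x) (fst y) \<or> lt (fst y) (fst x)" using s.tot qA xy unfolding Lo_def by blast
      qed
      show "\<forall>x\<in>Lo. \<forall>y\<in>Lo. \<forall>z\<in>Lo. lt (fst x) (fst y) \<longrightarrow> lt (fst y) (fst z) \<longrightarrow> lt (fst x) (fst z)"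
        using s.trn qA unfolding Lo_def by blast
    qed
    have Hmin: "\<exists>m\<in>Hs. \<forall>q\<in>Hs. q \<noteq> m \<longrightarrow> lt (fst m) (fst q)" if "Hs \<noteq> {}"
    proof (rule fin_max[where r = "\<lambda>x y. lt (fst y) (fst x)"])
      show "finite Hs" using fG unfolding Hs_def by simp
      show "Hs \<noteq> {}" by (fact that)
      show "\<forall>x\<in>Hs. \<forall>y\<in>Hs. x \<noteq> y \<longrightarrow> lt (fst y) (fst x) \<or> lt (fst x) (fst y)"
      proof (intro ballI impI)
        fix x y assume xy: "x \<in> Hs" "y \<in> Hs" "x \<noteq> y"
        then have "fst x \<noteq> fst y" using pf[of x y] unfolding Hs_def by (auto simp: prod_eq_iff)
        then show "lt (fst y) (fst x) \<or> lt (fst x) (fst y)" using s.tot qA xy unfolding Hs_def by blast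
      qed
      show "\<forall>x\<in>Hs. \<forall>y\<in>Hs. \<forall>z\<in>Hs. lt (fst y) (fst x) \<longrightarrow> lt (fst z) (fst y) \<longrightarrow> lt (fst z) (fst x)"
        using s.trn qA unfolding Hs_def by blast
    qed
    have toL: "\<forall>q\<in>Lo. lt' (snd q) b" if "m \<in> Lo" "\<forall>q\<in>Lo. q \<noteq> m \<longrightarrow> lt (fst q) (fst m)" "lt' (snd m) b" "b \<in> B" for m b
    proof
      fix q assume q: "q \<in> Lo"
      show "lt' (snd q) b"
      proof (cases "q = m")
        case False
        then have "lt (fst q) (fst m)" using that(2) q by blast
        then have "lt' (snd q) (snd m)" using pf[of q m] q that(1) unfolding Lo_def by blast
        then show ?thesis using t.trn qA q that unfolding Lo_def by blast
      qed (use that in simp)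
    qed
    have toH: "\<forall>q\<in>Hs. lt' b (snd q)" if "m \<in> Hs" "\<forall>q\<in>Hs. q \<noteq> m \<longrightarrow> lt (fst m) (fst q)" "lt' b (snd m)" "b \<in> B" for m b
    proof
      fix q assume q: "q \<in> Hs"
      show "lt' b (snd q)"
      proof (cases "q = m")
        case False
        then have "lt (fst m) (fst q)" using that(2) q by blast
        then have "lt' (snd m) (snd q)" using pf[of m q] q that(1) unfolding Hs_def by blast
        then show ?thesis using t.trn qA q that unfolding Hs_def by blast
      qed (use that in simp)
    qed
    show ?thesis
    proof (cases "Lo = {}")
      case Le: True
      show ?thesis
      proof (cases "Hs = {}")
        case True
        obtain b where "b \<in> B" "c' b = c a" using U a by (metis imageE imageI)
        then show ?thesis using suff Le True by blast
      next
        case False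
        obtain m where m: "m \<in> Hs" "\<forall>q\<in>Hs. q \<noteq> m \<longrightarrow> lt (fst m) (fst q)" using Hmin[OF False] by blast
        have mG: "m \<in> G" "lt a (fst m)" using m(1) unfolding Hs_def by auto
        have r: "(c a, c (fst m)) \<in> t.Rh" using R mG qA a unfolding s.Rh_def by blast
        have cm: "c' (snd m) = c (fst m)" using pf[OF mG(1) mG(1)] by simp
        obtain v where v: "v \<in> B" "lt' v (snd m)" "c' v = c a"
          using t.Rh_pair'[OF r _ cm] qA[OF mG(1)] by blast
        then show ?thesis using suff toH[OF m _ v(1)] Le by blast
      qed
    next
      case Lne: False
      obtain m where m: "m \<in> Lo" "\<forall>q\<in>Lo. q \<noteq> m \<longrightarrow> lt (fst q) (fst m)" using Lmax[OF Lne] by blast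
      have mG: "m \<in> G" "lt (fst m) a" using m(1) unfolding Lo_def by auto
      show ?thesis
      proof (cases "Hs = {}")
        case True
        have r: "(c (fst m), c a) \<in> t.Rh" using R mG qA a unfolding s.Rh_def by blast
        have cm: "c' (snd m) = c (fst m)" using pf[OF mG(1) mG(1)] by simp
        obtain v where v: "v \<in> B" "lt' (snd m) v" "c' v = c a"
          using t.Rh_pair[OF r _ cm] qA[OF mG(1)] by blast
        then show ?thesis using suff toL[OF m v(2) v(1)] True by blast
      next
        case False
        obtain h where h: "h \<in> Hs" "\<forall>q\<in>Hs. q \<noteq> h \<longrightarrow> lt (fst h) (fst q)" using Hmin[OF False] by blast
        have hG: "h \<in> G" "lt a (fst h)" using h(1) unfolding Hs_def by auto
        have r1: "(c (fst m), c a) \<in> t.Rh" using R mG qA a unfolding s.Rh_def by blast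
        have r2: "(c a, c (fst h)) \<in> t.Rh" using R hG qA a unfolding s.Rh_def by blast
        obtain u v w where uvw: "u \<in> B" "v \<in> B" "w \<in> B" "lt' u v" "lt' v w"
          "c' u = c (fst m)" "c' v = c a" "c' w = c (fst h)"
          using t.triple[OF r1 r2] by blast
        have mh: "lt (fst m) (fst h)" using s.trn mG hG qA a by blast
        then have mh': "lt' (snd m) (snd h)" using pf[OF mG(1) hG(1)] by simp
        have uw: "lt' u w" using t.trn uvw by blast
        have cc: "c' u = c' (snd m)" "c' w = c' (snd h)"
          using uvw(6,8) pf[OF mG(1) mG(1)] pf[OF hG(1) hG(1)] by simp_all
        obtain g where g: "clo_iso_on lt' c' B lt' c' B g" "g u = snd m" "g w = snd h"
          using t.auto2[OF uvw(1,3) conjunct2[OF qA[OF mG(1)]] conjunct2[OF qA[OF hG(1)]] uw mh' cc] by blast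
        have gv: "g v \<in> B" "lt' (snd m) (g v)" "lt' (g v) (snd h)" "c' (g v) = c a"
          using t.autD[OF g(1)] g(2,3) uvw by auto
        show ?thesis using suff[OF gv(1) gv(4) toL[OF m gv(2) gv(1)] toH[OF h gv(3) gv(1)]] gv(1) by blast
      qed
    qed
  qed
qed


definition dy :: "real \<Rightarrow> bool" where "dy x \<longleftrightarrow> (\<exists>n. \<exists>m::int. x * 2^n = of_int m)"
definition nu :: "real \<Rightarrow> nat" where "nu x = (LEAST n. \<exists>m::int. x * 2^n = of_int m)"

lemma nu_odd:
  fixes m :: int
  assumes "odd m"
  shows "nu (of_int m / 2^n) = n" "dy (of_int m / 2^n)"
proof -
  have P: "(\<exists>z::int. of_int m / 2^n * 2^j = (of_int z :: real)) \<longleftrightarrow> n \<le> j" for j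
  proof
    assume "\<exists>z::int. of_int m / 2^n * 2^j = (of_int z :: real)"
    then obtain z :: int where z: "of_int m / 2^n * 2^j = (of_int z :: real)" by blast
    show "n \<le> j"
    proof (rule ccontr)
      assume "\<not> n \<le> j"
      then obtain d where d: "n = j + Suc d" by (metis add_Suc_right less_imp_Suc_add not_le)
      have "(2::real)^n = 2^j * 2 * 2^d" by (simp add: d power_add)
      then have "of_int m = of_int z * (2 * 2^d :: real)" using z by (simp add: field_simps)
      then have "(of_int m :: real) = of_int (z * (2 * 2^d))" by simp
      then have "m = z * (2 * 2^d)" by (simp only: of_int_eq_iff)
      then have "even m" by simp
      then show False using assms by simp
    qed
  next
    assume "n \<le> j"
    then obtain d where d: "j = n + d" by (metis le_add_diff_inverse)
    have "of_int m / 2^n * 2^j = (of_int (m * 2^d) :: real)" by (simp add: d power_add)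
    then show "\<exists>z::int. of_int m / 2^n * 2^j = (of_int z :: real)" by blast
  qed
  show "nu (of_int m / 2^n) = n"
    unfolding nu_def by (rule Least_equality) (use P in auto)
  show "dy (of_int m / 2^n)" unfolding dy_def using P by blast
qed

lemma nu_point:
  assumes "e \<ge> 1"
  shows "nu (real a + 1 / 2^e) = e" "dy (real a + 1 / 2^e)"
proof -
  have eq: "real a + 1 / 2^e = of_int (int a * 2^e + 1) / 2^e" by (simp add: field_simps)
  have "odd (int a * 2^e + 1)" using assms by simp
  then show "nu (real a + 1 / 2^e) = e" "dy (real a + 1 / 2^e)" unfolding eq using nu_odd by blast+
qed

lemma dy_dense:
  assumes "k > 0" "i < k" "u < v"
  shows "\<exists>x. u < x \<and> x < v \<and> dy x \<and> nu x mod k = i"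
proof -
  obtain t :: nat where t: "2 / (v - u) < 2 ^ t" using real_arch_pow[of 2 "2 / (v - u)"] by auto
  define n where "n = i + Suc t * k"
  have nk: "n mod k = i" using assms by (simp only: n_def mod_mult_self1) simp
  have "Suc t * 1 \<le> Suc t * k" by (rule mult_le_mono2) (use assms(1) in simp)
  then have "Suc t \<le> Suc t * k" by simp
  then have "t \<le> n" unfolding n_def by linarith
  then have "(2::real)^t \<le> 2^n" by (rule power_increasing) simp
  with t have big: "2 / (v - u) < 2^n" by linarith
  have vu: "v - u > 0" using assms by simp
  have big2: "u * 2^n + 2 < v * 2^n"
  proof -
    have "2 < 2^n * (v - u)" using big vu by (simp add: field_simps)
    then show ?thesis by (simp add: algebra_simps)
  qed
  define c where "c = \<lfloor>u * 2^n\<rfloor> + 1"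
  have c1: "u * 2^n < of_int c" unfolding c_def by linarith
  have c2: "of_int c + 1 < v * 2^n" using big2 unfolding c_def by linarith
  obtain m :: int where m: "odd m" "m = c \<or> m = c + 1" by (metis even_plus_one_iff)
  have m1: "u * 2^n < of_int m" "of_int m < v * 2^n" using m c1 c2 by auto
  have pos: "(0::real) < 2^n" by simp
  have "u < of_int m / 2^n" "of_int m / 2^n < v"
    using m1 pos by (simp_all add: field_simps)
  moreover have "dy (of_int m / 2^n)" "nu (of_int m / 2^n) mod k = i" using nu_odd[OF m(1), of n] nk by simp_all
  ultimately show ?thesis by blast
qed

lemma dy_countable: "countable {x. dy x}"
proof -
  have "{x. dy x} \<subseteq> (\<lambda>(m::int, n::nat). of_int m / 2^n) ` UNIV"
  proof
    fix x assume "x \<in> {x. dy x}"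
    then obtain n and m :: int where "x * 2^n = of_int m" unfolding dy_def by blast
    then have "x = of_int m / 2^n" by (simp add: field_simps)
    then show "x \<in> (\<lambda>(m::int, n::nat). of_int m / 2^n) ` UNIV" by auto
  qed
  then show ?thesis by (rule countable_subset) simp
qed


lemma ext_from_int:
  assumes lin: "strict_linear_on A lt"
    and INT: "\<And>G a. finite G \<Longrightarrow> G \<subseteq> A \<times> A \<Longrightarrow> piso lt c lt c G \<Longrightarrow> a \<in> A \<Longrightarrow> (\<forall>q\<in>G. fst q \<noteq> a) \<Longrightarrow>
        \<exists>b\<in>A. c b = c a \<and> (\<forall>q\<in>G. lt (fst q) a \<longrightarrow> lt (snd q) b) \<and> (\<forall>q\<in>G. lt a (fst q) \<longrightarrow> lt b (snd q))"
  shows "extp A lt c A lt c"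
  unfolding extp_def
proof (intro allI impI ballI)
  have irr: "x \<in> A \<Longrightarrow> \<not> lt x x" for x using lin unfolding strict_linear_on_def by blast
  have trn: "x \<in> A \<Longrightarrow> y \<in> A \<Longrightarrow> z \<in> A \<Longrightarrow> lt x y \<Longrightarrow> lt y z \<Longrightarrow> lt x z" for x y z
    using lin unfolding strict_linear_on_def by blast
  have tot: "x \<in> A \<Longrightarrow> y \<in> A \<Longrightarrow> x \<noteq> y \<Longrightarrow> lt x y \<or> lt y x" for x y
    using lin unfolding strict_linear_on_def by blast
  have asym: "x \<in> A \<Longrightarrow> y \<in> A \<Longrightarrow> lt x y \<Longrightarrow> \<not> lt y x" for x y using irr trn by blast
  fix G a assume G: "finite G \<and> G \<subseteq> A \<times> A \<and> piso lt c lt c G" and a: "a \<in> A"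
  have GAB: "G \<subseteq> A \<times> A" and pG: "piso lt c lt c G" and fG: "finite G" using G by auto
  have qA: "q \<in> G \<Longrightarrow> fst q \<in> A \<and> snd q \<in> A" for q using GAB by auto
  show "\<exists>b\<in>A. piso lt c lt c (insert (a, b) G)"
  proof (cases "\<exists>b. (a,b) \<in> G")
    case True
    then obtain b where "(a,b) \<in> G" by blast
    then show ?thesis using GAB pG by (intro bexI[of _ b]) (auto simp: insert_absorb)
  next
    case False
    then have na: "\<forall>q\<in>G. fst q \<noteq> a" by auto
    obtain b where b: "b \<in> A" "c b = c a" "\<forall>q\<in>G. lt (fst q) a \<longrightarrow> lt (snd q) b"
      "\<forall>q\<in>G. lt a (fst q) \<longrightarrow> lt b (snd q)"
      using INT[OF fG GAB pG a na] by blast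
    have "piso lt c lt c (insert (a,b) G)"
    proof (rule piso_insert[OF pG])
      show "\<forall>q\<in>G. fst q \<noteq> a \<and> snd q \<noteq> b \<and> (lt (fst q) a \<longleftrightarrow> lt (snd q) b) \<and> (lt a (fst q) \<longleftrightarrow> lt b (snd q))"
      proof
        fix q assume q: "q \<in> G"
        have "lt (fst q) a \<or> lt a (fst q)" using tot[of "fst q" a] na q qA a by blast
        then show "fst q \<noteq> a \<and> snd q \<noteq> b \<and> (lt (fst q) a \<longleftrightarrow> lt (snd q) b) \<and> (lt a (fst q) \<longleftrightarrow> lt b (snd q))"
        proof
          assume h: "lt (fst q) a"
          then have h2: "lt (snd q) b" using b(3) q by blast
          have "\<not> lt a (fst q)" "\<not> lt b (snd q)" using asym h h2 qA[OF q] a b(1) by blast+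
          then show ?thesis using na q irr b(1) h h2 by auto
        next
          assume h: "lt a (fst q)"
          then have h2: "lt b (snd q)" using b(4) q by blast
          have "\<not> lt (fst q) a" "\<not> lt (snd q) b" using asym h h2 qA[OF q] a b(1) by blast+
          then show ?thesis using na q irr b(1) h h2 by auto
        qed
      qed
      show "lt a a \<longleftrightarrow> lt b b" using irr a b(1) by blast
      show "c a = c b" using b(2) by simp
    qed
    then show ?thesis using b(1) by blast
  qed
qed

definition below :: "nat set \<Rightarrow> (nat \<times> nat) set \<Rightarrow> nat \<Rightarrow> nat set" where
  "below U Rl i = {j\<in>U. (j,i) \<in> Rl \<and> (i,j) \<notin> Rl}"
definition idx :: "nat set \<Rightarrow> (nat \<times> nat) set \<Rightarrow> nat \<Rightarrow> nat" where
  "idx U Rl i = card (below U Rl i)"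
definition Dset :: "nat \<Rightarrow> nat set \<Rightarrow> (nat \<times> nat) set \<Rightarrow> nat \<Rightarrow> real set" where
  "Dset k U Rl i = (if (i,i) \<in> Rl
     then {x. real (idx U Rl i) < x \<and> x < real (idx U Rl i) + 1 \<and> dy x \<and> nu x mod k = i}
     else {real (idx U Rl i) + 1 / 2^(k+i)})"
definition Ar :: "nat \<Rightarrow> nat set \<Rightarrow> (nat \<times> nat) set \<Rightarrow> real set" where
  "Ar k U Rl = (\<Union>i\<in>U. Dset k U Rl i)"

locale cdata =
  fixes k :: nat and U :: "nat set" and Rl :: "(nat \<times> nat) set"
  assumes v: "(U, Rl) \<in> IS k"
begin

lemma Uk: "U \<subseteq> {..<k}" and Rsub: "Rl \<subseteq> U \<times> U" and tr: "trans Rl"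
  and tot: "\<And>i j. i \<in> U \<Longrightarrow> j \<in> U \<Longrightarrow> i \<noteq> j \<Longrightarrow> (i,j) \<in> Rl \<or> (j,i) \<in> Rl"
  using v unfolding IS_def Rels_def by auto

lemma trD: "(a,b) \<in> Rl \<Longrightarrow> (b,d) \<in> Rl \<Longrightarrow> (a,d) \<in> Rl" using tr by (rule transD)

lemma finU: "finite U" using Uk finite_subset by blast

lemma idx_lt:
  assumes "i \<in> U" "j \<in> U" "(i,j) \<in> Rl" "(j,i) \<notin> Rl"
  shows "idx U Rl i < idx U Rl j"
proof -
  have sub: "below U Rl i \<subseteq> below U Rl j"
  proof
    fix l assume "l \<in> below U Rl i"
    then have l: "l \<in> U" "(l,i) \<in> Rl" "(i,l) \<notin> Rl" unfolding below_def by auto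
    have "(l,j) \<in> Rl" using trD l(2) assms(3) by blast
    moreover have "(j,l) \<notin> Rl" using trD l(2) assms(4) by blast
    ultimately show "l \<in> below U Rl j" using l(1) unfolding below_def by blast
  qed
  have "i \<in> below U Rl j" "i \<notin> below U Rl i" using assms unfolding below_def by auto
  then have "below U Rl i \<subset> below U Rl j" using sub by blast
  moreover have "finite (below U Rl j)" using finU unfolding below_def by simp
  ultimately show ?thesis unfolding idx_def by (rule psubset_card_mono[rotated])
qed

lemma idx_eq:
  assumes "i \<in> U" "j \<in> U" "(i,j) \<in> Rl" "(j,i) \<in> Rl"
  shows "idx U Rl i = idx U Rl j"
proof -
  have "below U Rl i = below U Rl j"
    unfolding below_def using assms trD by blast
  then show ?thesis unfolding idx_def by simp
qed

lemma idx_cases: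
  assumes "i \<in> U" "j \<in> U"
  shows "idx U Rl i < idx U Rl j \<Longrightarrow> (i,j) \<in> Rl \<and> (j,i) \<notin> Rl"
    and "idx U Rl i = idx U Rl j \<Longrightarrow> i = j \<or> ((i,j) \<in> Rl \<and> (j,i) \<in> Rl)"
proof -
  have c: "i = j \<or> ((i,j) \<in> Rl \<and> (j,i) \<notin> Rl) \<or> ((j,i) \<in> Rl \<and> (i,j) \<notin> Rl) \<or> ((i,j) \<in> Rl \<and> (j,i) \<in> Rl)"
    using tot[OF assms] by blast
  show "idx U Rl i < idx U Rl j \<Longrightarrow> (i,j) \<in> Rl \<and> (j,i) \<notin> Rl"
    using c idx_lt[OF assms(2,1)] idx_eq[OF assms] by force
  show "idx U Rl i = idx U Rl j \<Longrightarrow> i = j \<or> ((i,j) \<in> Rl \<and> (j,i) \<in> Rl)"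
    using c idx_lt[OF assms] idx_lt[OF assms(2,1)] by force
qed

lemma point_alone:
  assumes "i \<in> U" "j \<in> U" "(i,i) \<notin> Rl" "idx U Rl i = idx U Rl j"
  shows "j = i"
  using idx_cases(2)[OF assms(1,2) assms(4)] assms(3) trD by blast

lemma D_props:
  assumes "i \<in> U" "x \<in> Dset k U Rl i"
  shows "nu x mod k = i" "real (idx U Rl i) < x" "x < real (idx U Rl i) + 1" "dy x"
proof -
  have ik: "i < k" using assms Uk by auto
  have "nu x mod k = i \<and> real (idx U Rl i) < x \<and> x < real (idx U Rl i) + 1 \<and> dy x"
  proof (cases "(i,i) \<in> Rl")
    case True then show ?thesis using assms(2) unfolding Dset_def by simp
  next
    case False
    then have x: "x = real (idx U Rl i) + 1 / 2^(k+i)" using assms(2) unfolding Dset_def by simp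
    have e: "k + i \<ge> 1" using ik by simp
    have "(2::real)^1 \<le> 2^(k+i)" using e by (rule power_increasing) simp
    then have "(1::real) / 2^(k+i) \<le> 1 / 2" by (simp add: field_simps)
    moreover have "(0::real) < 1 / 2^(k+i)" by simp
    moreover have "(k + i) mod k = i" using ik by simp
    ultimately show ?thesis
      unfolding x using nu_point[OF e, of "idx U Rl i"] by simp
  qed
  then show "nu x mod k = i" "real (idx U Rl i) < x" "x < real (idx U Rl i) + 1" "dy x" by blast+
qed

lemma D_ne: "i \<in> U \<Longrightarrow> \<exists>x. x \<in> Dset k U Rl i"
proof -
  assume i: "i \<in> U"
  then have ik: "i < k" "0 < k" using Uk by auto
  show ?thesis
  proof (cases "(i,i) \<in> Rl")
    case True
    obtain x where "real (idx U Rl i) < x" "x < real (idx U Rl i) + 1" "dy x" "nu x mod k = i"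
      using dy_dense[OF ik(2) ik(1), of "real (idx U Rl i)" "real (idx U Rl i) + 1"] by auto
    then show ?thesis using True unfolding Dset_def by auto
  next
    case False then show ?thesis unfolding Dset_def by auto
  qed
qed

definition "colr x = nu x mod k"

lemma Ar_col: "x \<in> Ar k U Rl \<Longrightarrow> colr x \<in> U \<and> x \<in> Dset k U Rl (colr x)"
  unfolding Ar_def colr_def using D_props by auto

lemma Ar_countable: "countable (Ar k U Rl)"
proof (rule countable_subset[OF _ dy_countable])
  show "Ar k U Rl \<subseteq> {x. dy x}" using Ar_col D_props by blast
qed

lemma in_Ar: "i \<in> U \<Longrightarrow> x \<in> Dset k U Rl i \<Longrightarrow> x \<in> Ar k U Rl"
  unfolding Ar_def by blast

lemma point_D: "i \<in> U \<Longrightarrow> (i,i) \<notin> Rl \<Longrightarrow> x \<in> Dset k U Rl i \<Longrightarrow> y \<in> Dset k U Rl i \<Longrightarrow> x = y"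
  unfolding Dset_def by simp

lemma block_D: "i \<in> U \<Longrightarrow> (i,i) \<in> Rl \<Longrightarrow> real (idx U Rl i) < x \<Longrightarrow> x < real (idx U Rl i) + 1 \<Longrightarrow> dy x \<Longrightarrow> nu x mod k = i
   \<Longrightarrow> x \<in> Dset k U Rl i"
  unfolding Dset_def by simp

lemma Rr_sub1:
  assumes h: "x \<in> Ar k U Rl" "y \<in> Ar k U Rl" "x < y"
  shows "(colr x, colr y) \<in> Rl"
proof -
  define i where "i = colr x"
  define j where "j = colr y"
  have u: "i \<in> U" "j \<in> U" "x \<in> Dset k U Rl i" "y \<in> Dset k U Rl j" using Ar_col h unfolding i_def j_def by auto
  note dx = D_props[OF u(1) u(3)] and dy' = D_props[OF u(2) u(4)]
  have "\<not> idx U Rl j < idx U Rl i"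
  proof
    assume "idx U Rl j < idx U Rl i"
    then have "real (idx U Rl j) + 1 \<le> real (idx U Rl i)" by simp
    then show False using dx dy' h(3) by linarith
  qed
  then consider "idx U Rl i < idx U Rl j" | "idx U Rl i = idx U Rl j" by linarith
  then have "(i,j) \<in> Rl"
  proof cases
    case 1 then show ?thesis using idx_cases(1)[OF u(1,2)] by blast
  next
    case 2
    then have c: "i = j \<or> ((i,j) \<in> Rl \<and> (j,i) \<in> Rl)" using idx_cases(2)[OF u(1,2)] by blast
    show ?thesis
    proof (cases "i = j")
      case ij: True
      show ?thesis
      proof (rule ccontr)
        assume "(i,j) \<notin> Rl"
        then have "x = y" using point_D[OF u(1) _ u(3)] u(4) ij by simp
        then show False using h(3) by simp
      qed
    next
      case False then show ?thesis using c by blast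
    qed
  qed
  then show ?thesis unfolding i_def j_def .
qed

lemma Rr_sub2:
  assumes ij: "(i,j) \<in> Rl"
  shows "\<exists>x y. (i, j) = (colr x, colr y) \<and> x \<in> Ar k U Rl \<and> y \<in> Ar k U Rl \<and> x < y"
proof -
  have u: "i \<in> U" "j \<in> U" using Rsub ij by auto
  show ?thesis
  proof (cases "(j,i) \<in> Rl")
    case False
    have lt: "idx U Rl i < idx U Rl j" using idx_lt[OF u ij False] .
    obtain x y where xy: "x \<in> Dset k U Rl i" "y \<in> Dset k U Rl j" using D_ne u by blast
    have "real (idx U Rl i) + 1 \<le> real (idx U Rl j)" using lt by simp
    then have "x < y" using D_props[OF u(1) xy(1)] D_props[OF u(2) xy(2)] by linarith
    moreover have "colr x = i" "colr y = j" using D_props[OF u(1) xy(1)] D_props[OF u(2) xy(2)] colr_def by auto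
    ultimately show ?thesis using in_Ar u xy by blast
  next
    case True
    have eq: "idx U Rl i = idx U Rl j" using idx_eq[OF u ij True] .
    have jj: "(j,j) \<in> Rl" using trD True ij by blast
    obtain x where x: "x \<in> Dset k U Rl i" using D_ne u by blast
    have kp: "0 < k" "j < k" using u Uk by auto
    have "x < real (idx U Rl j) + 1" using D_props[OF u(1) x] eq by simp
    then obtain y where y: "x < y" "y < real (idx U Rl j) + 1" "dy y" "nu y mod k = j"
      using dy_dense[OF kp(1) kp(2)] by blast
    have "real (idx U Rl j) < y" using D_props[OF u(1) x] eq y(1) by simp
    then have yD: "y \<in> Dset k U Rl j" using block_D[OF u(2) jj] y by blast
    have "colr x = i" "colr y = j" using D_props[OF u(1) x] y(4) colr_def by auto
    then show ?thesis using in_Ar u x yD y(1) by blast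
  qed
qed

lemma Rr_eq: "{(colr x, colr y) | x y. x \<in> Ar k U Rl \<and> y \<in> Ar k U Rl \<and> x < y} = Rl"
proof
  show "{(colr x, colr y) | x y. x \<in> Ar k U Rl \<and> y \<in> Ar k U Rl \<and> x < y} \<subseteq> Rl"
    using Rr_sub1 by blast
  show "Rl \<subseteq> {(colr x, colr y) | x y. x \<in> Ar k U Rl \<and> y \<in> Ar k U Rl \<and> x < y}"
  proof
    fix p assume "p \<in> Rl"
    moreover obtain i j where "p = (i,j)" by (cases p)
    ultimately show "p \<in> {(colr x, colr y) | x y. x \<in> Ar k U Rl \<and> y \<in> Ar k U Rl \<and> x < y}"
      using Rr_sub2[of i j] by auto
  qed
qed

lemma col_Ar: "colr ` Ar k U Rl = U"
proof
  show "colr ` Ar k U Rl \<subseteq> U" using Ar_col by blast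
  show "U \<subseteq> colr ` Ar k U Rl"
  proof
    fix i assume i: "i \<in> U"
    then obtain x where x: "x \<in> Dset k U Rl i" using D_ne by blast
    then have "colr x = i" using D_props[OF i x] colr_def by simp
    then show "i \<in> colr ` Ar k U Rl" using in_Ar[OF i x] by (metis imageI)
  qed
qed


lemma int_real:
  assumes a: "a \<in> Ar k U Rl" and P: "finite P" "P \<subseteq> Ar k U Rl \<times> Ar k U Rl"
    and Pc: "\<forall>q\<in>P. colr (fst q) = colr (snd q)" and Pa: "\<forall>q\<in>P. fst q \<noteq> a"
    and Po: "\<forall>q\<in>P. \<forall>q'\<in>P. fst q < fst q' \<longleftrightarrow> snd q < snd q'"
  shows "\<exists>b\<in>Ar k U Rl. colr b = colr a \<and> (\<forall>q\<in>P. fst q < a \<longrightarrow> snd q < b) \<and> (\<forall>q\<in>P. a < fst q \<longrightarrow> b < snd q)"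
proof -
  define i where "i = colr a"
  have ai: "i \<in> U" "a \<in> Dset k U Rl i" using Ar_col[OF a] unfolding i_def by auto
  note da = D_props[OF ai]
  have qD: "colr (fst q) \<in> U \<and> fst q \<in> Dset k U Rl (colr (fst q)) \<and> snd q \<in> Dset k U Rl (colr (fst q))" if "q \<in> P" for q
  proof -
    have "fst q \<in> Ar k U Rl" "snd q \<in> Ar k U Rl" using that P(2) by (auto simp: mem_Times_iff)
    moreover have "colr (snd q) = colr (fst q)" using Pc that by simp
    ultimately show ?thesis using Ar_col by metis
  qed
  have low: "snd q < real (idx U Rl i) + 1 \<and> ((i,i) \<notin> Rl \<longrightarrow> snd q < a)" if q: "q \<in> P" "fst q < a" for q
  proof -
    define j where "j = colr (fst q)"
    have j: "j \<in> U" "fst q \<in> Dset k U Rl j" "snd q \<in> Dset k U Rl j" using qD[OF q(1)] unfolding j_def by auto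
    note d1 = D_props[OF j(1) j(2)] and d2 = D_props[OF j(1) j(3)]
    have le: "idx U Rl j \<le> idx U Rl i"
    proof (rule ccontr)
      assume "\<not> idx U Rl j \<le> idx U Rl i"
      then have "real (idx U Rl i) + 1 \<le> real (idx U Rl j)" by simp
      then show False using d1 da q(2) by linarith
    qed
    then have "snd q < real (idx U Rl i) + 1" using d2 by linarith
    moreover have "snd q < a" if pt: "(i,i) \<notin> Rl"
    proof -
      have "idx U Rl j \<noteq> idx U Rl i"
      proof
        assume "idx U Rl j = idx U Rl i"
        then have "j = i" using point_alone[OF ai(1) j(1) pt] by simp
        then have "fst q = a" using point_D[OF ai(1) pt] j(2) ai(2) by simp
        then show False using Pa q(1) by blast
      qed
      then have "real (idx U Rl j) + 1 \<le> real (idx U Rl i)" using le by simp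
      then show ?thesis using d2 da by linarith
    qed
    ultimately show ?thesis by blast
  qed
  have high: "real (idx U Rl i) < snd q \<and> ((i,i) \<notin> Rl \<longrightarrow> a < snd q)" if q: "q \<in> P" "a < fst q" for q
  proof -
    define j where "j = colr (fst q)"
    have j: "j \<in> U" "fst q \<in> Dset k U Rl j" "snd q \<in> Dset k U Rl j" using qD[OF q(1)] unfolding j_def by auto
    note d1 = D_props[OF j(1) j(2)] and d2 = D_props[OF j(1) j(3)]
    have le: "idx U Rl i \<le> idx U Rl j"
    proof (rule ccontr)
      assume "\<not> idx U Rl i \<le> idx U Rl j"
      then have "real (idx U Rl j) + 1 \<le> real (idx U Rl i)" by simp
      then show False using d1 da q(2) by linarith
    qed
    then have "real (idx U Rl i) < snd q" using d2 by linarith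
    moreover have "a < snd q" if pt: "(i,i) \<notin> Rl"
    proof -
      have "idx U Rl j \<noteq> idx U Rl i"
      proof
        assume "idx U Rl j = idx U Rl i"
        then have "j = i" using point_alone[OF ai(1) j(1) pt] by simp
        then have "fst q = a" using point_D[OF ai(1) pt] j(2) ai(2) by simp
        then show False using Pa q(1) by blast
      qed
      then have "real (idx U Rl i) + 1 \<le> real (idx U Rl j)" using le by simp
      then show ?thesis using d2 da by linarith
    qed
    ultimately show ?thesis by blast
  qed
  show ?thesis
  proof (cases "(i,i) \<in> Rl")
    case False
    show ?thesis using a low high False unfolding i_def by blast
  next
    case True
    define Lw where "Lw = insert (real (idx U Rl i)) (snd ` {q\<in>P. fst q < a})"
    define Hg where "Hg = insert (real (idx U Rl i) + 1) (snd ` {q\<in>P. a < fst q})"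
    have fin: "finite Lw" "finite Hg" "Lw \<noteq> {}" "Hg \<noteq> {}" using P(1) unfolding Lw_def Hg_def by auto
    have sep: "s < t" if st: "s \<in> Lw" "t \<in> Hg" for s t
    proof -
      consider "s = real (idx U Rl i)" | q where "q \<in> P" "fst q < a" "s = snd q"
        using st(1) unfolding Lw_def by blast
      then show ?thesis
      proof cases
        case 1
        then show ?thesis using st(2) high unfolding Hg_def by force
      next
        case (2 q)
        consider "t = real (idx U Rl i) + 1" | q' where "q' \<in> P" "a < fst q'" "t = snd q'"
          using st(2) unfolding Hg_def by blast
        then show ?thesis
        proof cases
          case 1 then show ?thesis using low 2 by force
        next
          case (2 q')
          have "fst q < fst q'" using \<open>fst q < a\<close> \<open>a < fst q'\<close> by simp
          then show ?thesis using Po \<open>q \<in> P\<close> \<open>q' \<in> P\<close> \<open>s = snd q\<close> \<open>t = snd q'\<close> by blast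
        qed
      qed
    qed
    have lohi: "Max Lw < Min Hg" using sep Max_in Min_in fin by blast
    have kp: "0 < k" "i < k" using ai Uk by auto
    obtain x where x: "Max Lw < x" "x < Min Hg" "dy x" "nu x mod k = i"
      using dy_dense[OF kp lohi] by blast
    have "real (idx U Rl i) \<le> Max Lw" using fin by (simp add: Lw_def)
    moreover have "Min Hg \<le> real (idx U Rl i) + 1" using fin by (simp add: Hg_def)
    ultimately have xD: "x \<in> Dset k U Rl i" using block_D[OF ai(1) True] x by simp
    have xA: "x \<in> Ar k U Rl" using in_Ar[OF ai(1) xD] .
    have "colr x = i" using x(4) colr_def by simp
    moreover have "\<forall>q\<in>P. fst q < a \<longrightarrow> snd q < x"
    proof (intro ballI impI)
      fix q assume "q \<in> P" "fst q < a"
      then have "snd q \<in> Lw" unfolding Lw_def by blast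
      then have "snd q \<le> Max Lw" using fin by simp
      then show "snd q < x" using x(1) by simp
    qed
    moreover have "\<forall>q\<in>P. a < fst q \<longrightarrow> x < snd q"
    proof (intro ballI impI)
      fix q assume "q \<in> P" "a < fst q"
      then have "snd q \<in> Hg" unfolding Hg_def by blast
      then have "Min Hg \<le> snd q" using fin by simp
      then show "x < snd q" using x(2) by simp
    qed
    ultimately show ?thesis using xA unfolding i_def by blast
  qed
qed

definition "An = to_nat_on (Ar k U Rl) ` Ar k U Rl"
definition "rr = from_nat_into (Ar k U Rl)"
definition "ltn u v \<longleftrightarrow> rr u < rr v"
definition "cn u = colr (rr u)"

lemma rr: "u \<in> An \<Longrightarrow> rr u \<in> Ar k U Rl \<and> to_nat_on (Ar k U Rl) (rr u) = u"
  unfolding An_def rr_def using from_nat_into_to_nat_on[OF Ar_countable] by auto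

lemma ee: "x \<in> Ar k U Rl \<Longrightarrow> to_nat_on (Ar k U Rl) x \<in> An \<and> rr (to_nat_on (Ar k U Rl) x) = x"
  unfolding An_def rr_def using from_nat_into_to_nat_on[OF Ar_countable] by auto

lemma rr_inj: "u \<in> An \<Longrightarrow> v \<in> An \<Longrightarrow> rr u = rr v \<Longrightarrow> u = v"
  using rr by metis

lemma lin_n: "strict_linear_on An ltn"
  unfolding strict_linear_on_def ltn_def using rr_inj by fastforce

lemma clo_n: "is_clo k (An, ltn, cn)"
  unfolding is_clo_def using lin_n rr Ar_col Uk unfolding cn_def by auto

lemma inv_n: "inv_h (An, ltn, cn) = (U, Rl)"
proof -
  have "cn ` An = colr ` Ar k U Rl"
  proof
    show "cn ` An \<subseteq> colr ` Ar k U Rl"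
    proof
      fix y assume "y \<in> cn ` An"
      then obtain u where "u \<in> An" "y = colr (rr u)" unfolding cn_def by blast
      then show "y \<in> colr ` Ar k U Rl" using rr by blast
    qed
    show "colr ` Ar k U Rl \<subseteq> cn ` An"
    proof
      fix y assume "y \<in> colr ` Ar k U Rl"
      then obtain x where x: "x \<in> Ar k U Rl" "y = colr x" by blast
      then have "y = cn (to_nat_on (Ar k U Rl) x)" "to_nat_on (Ar k U Rl) x \<in> An" using ee unfolding cn_def by auto
      then show "y \<in> cn ` An" by blast
    qed
  qed
  moreover have "{(cn x, cn y) | x y. x \<in> An \<and> y \<in> An \<and> ltn x y} = {(colr x, colr y) | x y. x \<in> Ar k U Rl \<and> y \<in> Ar k U Rl \<and> x < y}"
  proof
    show "{(cn x, cn y) | x y. x \<in> An \<and> y \<in> An \<and> ltn x y} \<subseteq> {(colr x, colr y) | x y. x \<in> Ar k U Rl \<and> y \<in> Ar k U Rl \<and> x < y}"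
      unfolding cn_def ltn_def using rr by blast
    show "{(colr x, colr y) | x y. x \<in> Ar k U Rl \<and> y \<in> Ar k U Rl \<and> x < y} \<subseteq> {(cn x, cn y) | x y. x \<in> An \<and> y \<in> An \<and> ltn x y}"
    proof
      fix p assume "p \<in> {(colr x, colr y) | x y. x \<in> Ar k U Rl \<and> y \<in> Ar k U Rl \<and> x < y}"
      then obtain x y where h: "p = (colr x, colr y)" "x \<in> Ar k U Rl" "y \<in> Ar k U Rl" "x < y" by blast
      let ?u = "to_nat_on (Ar k U Rl) x" and ?v = "to_nat_on (Ar k U Rl) y"
      have "p = (cn ?u, cn ?v)" "?u \<in> An" "?v \<in> An" "ltn ?u ?v" using ee h unfolding cn_def ltn_def by auto
      then show "p \<in> {(cn x, cn y) | x y. x \<in> An \<and> y \<in> An \<and> ltn x y}" by blast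
    qed
  qed
  ultimately show ?thesis unfolding inv_h_def using col_Ar Rr_eq by simp
qed

lemma ext_n: "extp An ltn cn An ltn cn"
proof (rule ext_from_int[OF lin_n])
  fix G a assume G: "finite G" "G \<subseteq> An \<times> An" "piso ltn cn ltn cn G" and a: "a \<in> An" and na: "\<forall>q\<in>G. fst q \<noteq> a"
  define P where "P = (\<lambda>q. (rr (fst q), rr (snd q))) ` G"
  have pf: "(fst p = fst q \<longleftrightarrow> snd p = snd q) \<and> (ltn (fst p) (fst q) \<longleftrightarrow> ltn (snd p) (snd q)) \<and> cn (fst p) = cn (snd p)"
    if "p \<in> G" "q \<in> G" for p q using G(3) that unfolding piso_def by blast
  have qA: "q \<in> G \<Longrightarrow> fst q \<in> An \<and> snd q \<in> An" for q using G(2) by auto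
  have "\<exists>b\<in>Ar k U Rl. colr b = colr (rr a) \<and> (\<forall>q\<in>P. fst q < rr a \<longrightarrow> snd q < b) \<and> (\<forall>q\<in>P. rr a < fst q \<longrightarrow> b < snd q)"
  proof (rule int_real)
    show "rr a \<in> Ar k U Rl" using rr a by blast
    show "finite P" using G(1) unfolding P_def by simp
    show "P \<subseteq> Ar k U Rl \<times> Ar k U Rl" using rr qA unfolding P_def by auto
    show "\<forall>q\<in>P. colr (fst q) = colr (snd q)" using pf unfolding P_def cn_def by auto
    show "\<forall>q\<in>P. fst q \<noteq> rr a" using na rr_inj qA a unfolding P_def by auto
    show "\<forall>q\<in>P. \<forall>q'\<in>P. fst q < fst q' \<longleftrightarrow> snd q < snd q'" using pf unfolding P_def ltn_def by auto
  qed
  then obtain b where b: "b \<in> Ar k U Rl" "colr b = colr (rr a)" "\<forall>q\<in>P. fst q < rr a \<longrightarrow> snd q < b"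
    "\<forall>q\<in>P. rr a < fst q \<longrightarrow> b < snd q" by blast
  let ?b = "to_nat_on (Ar k U Rl) b"
  have bb: "?b \<in> An" "rr ?b = b" using ee[OF b(1)] by auto
  show "\<exists>b\<in>An. cn b = cn a \<and> (\<forall>q\<in>G. ltn (fst q) a \<longrightarrow> ltn (snd q) b) \<and> (\<forall>q\<in>G. ltn a (fst q) \<longrightarrow> ltn b (snd q))"
  proof (intro bexI[of _ ?b] conjI ballI impI)
    show "?b \<in> An" by (fact bb(1))
    show "cn ?b = cn a" using bb b(2) unfolding cn_def by simp
  next
    fix q assume "q \<in> G" "ltn (fst q) a"
    then have "(rr (fst q), rr (snd q)) \<in> P" "rr (fst q) < rr a" unfolding P_def ltn_def by auto
    then show "ltn (snd q) ?b" using b(3) bb unfolding ltn_def by fastforce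
  next
    fix q assume "q \<in> G" "ltn a (fst q)"
    then have "(rr (fst q), rr (snd q)) \<in> P" "rr a < rr (fst q)" unfolding P_def ltn_def by auto
    then show "ltn ?b (snd q)" using b(4) bb unfolding ltn_def by fastforce
  qed
qed

lemma hom_n: "clo_homogeneous (An, ltn, cn)"
  unfolding clo_homogeneous_def
proof (simp only: prod.case, intro allI impI, elim conjE)
  fix X Y p assume X: "finite X" "X \<subseteq> An" "Y \<subseteq> An" and iso: "clo_iso_on ltn cn X ltn cn Y p"
  have bij: "bij_betw p X Y" and ord: "\<forall>x\<in>X. \<forall>y\<in>X. ltn x y \<longleftrightarrow> ltn (p x) (p y)" and cc: "\<forall>x\<in>X. cn (p x) = cn x"
    using iso unfolding clo_iso_on_def by auto
  define G0 where "G0 = (\<lambda>x. (x, p x)) ` X"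
  have "finite G0" using X(1) unfolding G0_def by simp
  moreover have "G0 \<subseteq> An \<times> An" using X bij bij_betwE unfolding G0_def by fastforce
  moreover have "piso ltn cn ltn cn G0"
    unfolding piso_def G0_def using bij ord cc unfolding bij_betw_def inj_on_def by auto
  ultimately obtain f where f: "clo_iso_on ltn cn An ltn cn An f" "\<forall>q\<in>G0. f (fst q) = snd q"
    using back_forth[OF ext_n ext_n] by blast
  then show "\<exists>g. clo_iso_on ltn cn An ltn cn An g \<and> (\<forall>x\<in>X. g x = p x)"
    unfolding G0_def by auto
qed

end

lemma hclo_exists:
  assumes "(U, Rl) \<in> IS k"
  shows "\<exists>S. is_hclo k S \<and> inv_h S = (U, Rl)"
proof -
  interpret cdata k U Rl by (rule cdata.intro[OF assms])
  show ?thesis using clo_n hom_n inv_n unfolding is_hclo_def by blast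
qed


lemma clo_iso_inv:
  assumes "clo_iso S T"
  shows "inv_h S = inv_h T"
proof -
  obtain A lt c where S: "S = (A, lt, c)" by (cases S) auto
  obtain B lt' c' where T: "T = (B, lt', c')" by (cases T) auto
  obtain f where f: "bij_betw f A B" "\<forall>x\<in>A. \<forall>y\<in>A. lt x y \<longleftrightarrow> lt' (f x) (f y)" "\<forall>x\<in>A. c' (f x) = c x"
    using assms unfolding S T clo_iso_def clo_iso_on_def by auto
  have fA: "f ` A = B" using f(1) by (simp add: bij_betw_def)
  have U: "c ` A = c' ` B"
  proof -
    have "c' ` B = c' ` f ` A" using fA by simp
    also have "\<dots> = c ` A" using f(3) by (auto simp: image_iff)
    finally show ?thesis by simp
  qed
  have R: "{(c x, c y) | x y. x \<in> A \<and> y \<in> A \<and> lt x y} = {(c' x, c' y) | x y. x \<in> B \<and> y \<in> B \<and> lt' x y}"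
  proof
    show "{(c x, c y) | x y. x \<in> A \<and> y \<in> A \<and> lt x y} \<subseteq> {(c' x, c' y) | x y. x \<in> B \<and> y \<in> B \<and> lt' x y}"
    proof
      fix p assume "p \<in> {(c x, c y) | x y. x \<in> A \<and> y \<in> A \<and> lt x y}"
      then obtain x y where h: "p = (c x, c y)" "x \<in> A" "y \<in> A" "lt x y" by blast
      then have "p = (c' (f x), c' (f y))" "f x \<in> B" "f y \<in> B" "lt' (f x) (f y)" using f fA by auto
      then show "p \<in> {(c' x, c' y) | x y. x \<in> B \<and> y \<in> B \<and> lt' x y}" by blast
    qed
    show "{(c' x, c' y) | x y. x \<in> B \<and> y \<in> B \<and> lt' x y} \<subseteq> {(c x, c y) | x y. x \<in> A \<and> y \<in> A \<and> lt x y}"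
    proof
      fix p assume "p \<in> {(c' x, c' y) | x y. x \<in> B \<and> y \<in> B \<and> lt' x y}"
      then obtain x' y' where h: "p = (c' x', c' y')" "x' \<in> B" "y' \<in> B" "lt' x' y'" by blast
      then obtain x y where xy: "x \<in> A" "y \<in> A" "x' = f x" "y' = f y" using fA by blast
      then have "p = (c x, c y)" "lt x y" using h f by auto
      then show "p \<in> {(c x, c y) | x y. x \<in> A \<and> y \<in> A \<and> lt x y}" using xy by blast
    qed
  qed
  show ?thesis unfolding S T inv_h_def using U R by simp
qed

lemma inv_clo_iso:
  assumes "is_hclo k S" "is_hclo k T" "inv_h S = inv_h T"
  shows "clo_iso S T"
proof -
  obtain A lt c where S: "S = (A, lt, c)" by (cases S) auto
  obtain B lt' c' where T: "T = (B, lt', c')" by (cases T) auto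
  have hs: "hstr k A lt c" using assms(1) S by (simp add: hstr_def)
  have ht: "hstr k B lt' c'" using assms(2) T by (simp add: hstr_def)
  have e1: "extp A lt c B lt' c'" using hstr_ext[OF hs ht] assms(3) S T by simp
  have e2: "extp B lt' c' A lt c" using hstr_ext[OF ht hs] assms(3) S T by simp
  have "piso lt c lt' c' {}" unfolding piso_def by simp
  then obtain f where "clo_iso_on lt c A lt' c' B f" using back_forth[OF e1 e2, of "{}"] by auto
  then show ?thesis unfolding S T clo_iso_def by auto
qed

lemma hclo_image: "inv_h ` {S. is_hclo k S} = IS k"
proof
  show "inv_h ` {S. is_hclo k S} \<subseteq> IS k"
  proof
    fix v assume "v \<in> inv_h ` {S. is_hclo k S}"
    then obtain S where S: "is_hclo k S" "v = inv_h S" by blast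
    obtain A lt c where "S = (A, lt, c)" by (cases S) auto
    then show "v \<in> IS k" using S hstr.inv_IS[of k A lt c] by (simp add: hstr_def)
  qed
  show "IS k \<subseteq> inv_h ` {S. is_hclo k S}"
  proof
    fix v assume v: "v \<in> IS k"
    obtain U Rl where "v = (U, Rl)" by (cases v)
    then obtain S where "is_hclo k S" "inv_h S = v" using hclo_exists v by blast
    then show "v \<in> inv_h ` {S. is_hclo k S}" by blast
  qed
qed

lemma L_IS: "L k = card (IS k)"
proof -
  have "L k = card (inv_h ` {S. is_hclo k S})"
    unfolding L_def
  proof (rule card_iso_types_inv)
    fix S T assume "is_hclo k S" "is_hclo k T"
    then show "clo_iso S T \<longleftrightarrow> inv_h S = inv_h T" using clo_iso_inv inv_clo_iso by blast
  qed
  then show ?thesis using hclo_image by simp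
qed

lemma L_all_J: "L_all k = J k"
proof -
  define P where "P = (\<lambda>S. is_hclo k S \<and> snd (snd S) ` fst S = {0..<k})"
  have "L_all k = card (inv_h ` {S. P S})"
    unfolding L_all_def P_def[symmetric]
  proof (rule card_iso_types_inv)
    fix S T assume "P S" "P T"
    then show "clo_iso S T \<longleftrightarrow> inv_h S = inv_h T" using clo_iso_inv inv_clo_iso unfolding P_def by blast
  qed
  also have "inv_h ` {S. P S} = {v \<in> IS k. fst v = {..<k}}"
  proof
    have fst_inv: "fst (inv_h S) = snd (snd S) ` fst S" for S by (cases S) (simp add: inv_h_def)
    show "inv_h ` {S. P S} \<subseteq> {v \<in> IS k. fst v = {..<k}}"
      using hclo_image fst_inv unfolding P_def by (auto simp: atLeast0LessThan)
    show "{v \<in> IS k. fst v = {..<k}} \<subseteq> inv_h ` {S. P S}"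
    proof
      fix v assume v: "v \<in> {v \<in> IS k. fst v = {..<k}}"
      obtain U Rl where "v = (U, Rl)" by (cases v)
      then obtain S where S: "is_hclo k S" "inv_h S = v" using hclo_exists v by blast
      then have "P S" using fst_inv[of S] v unfolding P_def by (auto simp: atLeast0LessThan)
      then show "v \<in> inv_h ` {S. P S}" using S(2) by blast
    qed
  qed
  finally show ?thesis using card_IS_all by simp
qed

theorem mainTheorem9:
  shows "(\<forall>k. L k = num_models_T k)
    \<and> (\<forall>k. L k = (\<Sum>i=0..k. J i * (k choose i)))
    \<and> Abs_fps (\<lambda>k. real (L k) / fact k) = fps_exp (1::real) / (2 - fps_X - fps_exp 1)
    \<and> (let Z = 2 - lambertW (exp 2); R = - exp 2 / (exp (lambertW (exp 2)) + exp 2) in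
        (\<lambda>k. real (L k)) \<sim>[at_top] (\<lambda>k. - fact k * R * (1 / Z) ^ (k + 1)))
    \<and> (\<lambda>k. real (L_all k) / real (L k)) \<longlonglongrightarrow> 1 / lambertW (exp 2)"
proof -
  have h1: "\<And>k. L k = num_models_T k" using L_IS num_models_T_eq by simp
  have h2: "\<And>k. L k = (\<Sum>i=0..k. J i * (k choose i))" using L_IS card_IS by simp
  have h3: "\<And>k. L_all k = J k" by (rule L_all_J)
  note a = analytic_part[OF h2 h3]
  show ?thesis using h1 h2 a by blast
qed


end
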